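(* Assume each $p_i$ is piece-wise continuous and there exists $0\leqslant\bar t<\infty$ with $p_i(t)=p_i^*$ for all $i\in\mathcal{I}$ and $t\geqslant\bar t$, where $\sum_{i\in\mathcal{I}}p_i^*=0$, and assume $\epsilon_iT_i<1$ for every $i\in\mathcal{I}_u$. Then the closed-loop system described in the context, with the distributed MPC component, satisfies: (i) for every $i\in\mathcal{I}_\omega$, if $\omega_i(0)\in[\underline\omega_i,\bar\omega_i]$ then $\omega_i(t)\in[\underline\omega_i,\bar\omega_i]$ for all $t\geqslant0$; (ii) for every $i\in\mathcal{I}_\omega$, if $\omega_i(0)\notin[\underline\omega_i,\bar\omega_i]$ there is a finite $t_0$ with $\omega_i(t)\in[\underline\omega_i,\bar\omega_i]$ for all $t\geqslant t_0$; (iii) the closed-loop trajectory converges to the equilibrium $(f_\infty,\mathbf{0}_n)$ of the open-loop system. Furthermore, $\alpha(t)$, $\alpha_{MPC}(t)$, $\alpha_{DF}(t)$ converge to $\mathbf{0}_n$ as $t\to\infty$.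
   Context: Network: $\mathcal{G}=(\mathcal{I},\mathcal{E})$ connected undirected graph, $\mathcal{I}=\{1,\dots,n\}$, $|\mathcal{E}|=m$, fixed orientation, incidence matrix $D$; $M=\mathrm{diag}(M_i)$, $E=\mathrm{diag}(E_i)$, $M_i,E_i>0$; $Y_b$ diagonal positive (entry $b_{ij}$ for edge $(i,j)$). $\mathcal{I}_\omega\subseteq\mathcal{I}_u\subseteq\mathcal{I}$; $\mathbb{A}=\{y:y_w=0\ \forall w\notin\mathcal{I}_u\}$. Dynamics $\dot f=Y_bD\omega$, $M\dot\omega=-E\omega-D^Tf+p(t)+\alpha(t)$; $(f_\infty,\mathbf{0}_n)$ is the equilibrium to which the open-loop system ($\alpha\equiv0$) converges. MPC problem for a graph: for a graph $\mathcal{H}=(\mathcal{J},\mathcal{F})$ (with inherited orientation, incidence matrix, and restricted $M,E,Y_b$), sets $\mathcal{J}_\omega\subseteq\mathcal{J}_u\subseteq\mathcal{J}$, data $\hat P=[\hat p(0),..,\hat p(N-1)]$, $f_0,\omega_0,a_0$ ($a_0$ zero outside $\mathcal{J}_u$), $\hat u^*(\mathcal{H},\mathcal{J}_u,\mathcal{J}_\omega,\hat P,f_0,\omega_0,a_0)$ is the $\hat u$-part of the unique minimizer of $\sum_{i\in\mathcal{J}_u}c_i\hat u_i^2+d\beta^2$ subject to, for $k=0..N-1$: $\hat f(k+1)=\hat f(k)+TY_bD\hat\omega(k)$; $M\hat\omega(k+1)=M\hat\omega(k)+T(-E\hat\omega(k)-D^T\hat f(k)+\hat p(k)+\hat u)$;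 $\hat\alpha_i(k+1)=\hat\alpha_i(k)+T(-\hat\alpha_i(k)/T_i-\hat\omega_i(k)+\hat u_i)$ ($i\in\mathcal{J}_u$); $\hat\alpha_i\equiv0$, $\hat u_i=0$ ($i\notin\mathcal{J}_u$); initial values $(f_0,\omega_0,a_0)$; $\underline\omega_i-\beta\leqslant\hat\omega_i(k+1)\leqslant\bar\omega_i+\beta$ ($i\in\mathcal{J}_\omega$); $|\hat u_i|\leqslant\epsilon_i|a_{0,i}|$ ($i\in\mathcal{J}_u$). Here $T,\tilde t>0$, $N=\lceil\tilde t/T\rceil$, $c_i,\epsilon_i,T_i>0$, $d>0$, $\underline\omega_i<\bar\omega_i$. Partition: induced subgraphs $\mathcal{G}_\beta=(\mathcal{I}_\beta,\mathcal{E}_\beta)$, $\beta=1,\dots,r$, with $\mathcal{I}_u\subseteq\bigcup_\beta\mathcal{I}_\beta$ and $\mathcal{I}_\eta\cap\mathcal{I}_\beta\cap\mathcal{I}_u=\emptyset$ for $\eta\neq\beta$. Let $\mathcal{I}_{u,\beta}=\mathcal{I}_u\cap\mathcal{I}_\beta$, $\mathcal{I}_{\omega,\beta}=\mathcal{I}_\omega\cap\mathcal{I}_\beta$, $\mathcal{E}'_\beta$ the edges between $\mathcal{I}_\beta$ and $\mathcal{I}\setminus\mathcal{I}_\beta$, and $(f_\beta,\omega_\beta,\alpha_{MPC,\beta})$ the states restricted to $\mathcal{G}_\beta$. Each region has sampling times $0=\Delta^0_\beta<\Delta^1_\beta<\cdots$ and piece-wise continuous forecasts $p^{fcst}_{t,\beta}:[t,t+\tilde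 t]\to\mathbb{R}^{|\mathcal{I}_\beta|}$. For $i\in\mathcal{I}_\beta$ define $p^{fcst,f}_{t,\beta,i}(\tau)=\sum_{j\to i,(j,i)\in\mathcal{E}'_\beta}f_{ji}(t)-\sum_{i\to j,(i,j)\in\mathcal{E}'_\beta}f_{ij}(t)$ for $\tau\in[t,t+\tilde t]$ (where $j\to i$ means $j$ is the positive end of the edge), and $\bar p^{fcst}_{t,\beta}=p^{fcst}_{t,\beta}+p^{fcst,f}_{t,\beta}$, sampled as $\hat P_{j,\beta}=[\bar p^{fcst}_{\Delta^j_\beta,\beta}(\Delta^j_\beta+kT)]_{k=0}^{N-1}$. Distributed MPC: for $i\in\mathcal{I}_u$, with $\beta$ the unique region containing $i$, and $t\in[\Delta^j_\beta,\Delta^{j+1}_\beta)$, $u_{MPC,i}(t)=\hat u^*_i(\mathcal{G}_\beta,\mathcal{I}_{u,\beta},\mathcal{I}_{\omega,\beta},\hat P_{j,\beta},f_\beta(\Delta^j_\beta),\omega_\beta(\Delta^j_\beta),\alpha_{MPC,\beta}(\Delta^j_\beta))$; $u_{MPC,i}=0$ for $i\notin\mathcal{I}_u$. Filters: $\hat u_{MPC,i}=\max\{-\epsilon_i|\alpha_{MPC,i}|,\min\{\epsilon_i|\alpha_{MPC,i}|,u_{MPC,i}\}\}$; $\dot\alpha_{MPC,i}=-\alpha_{MPC,i}/T_i-\omega_i+\hat u_{MPC,i}$ for $i\in\mathcal{I}_u$, $\alpha_{MPC,i}\equiv0$ otherwise. Top layer: for $i\in\mathcal{I}_\omega$, $\bar\gamma_i,\underline\gamma_i>0$,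 $\underline\omega_i<\underline\omega_i^{thr}<0<\bar\omega_i^{thr}<\bar\omega_i$, $v_i=E_i\omega_i+[D^T]_if-p_i-\alpha_{MPC,i}$; $\alpha_{DF,i}=\min\{0,\bar\gamma_i(\bar\omega_i-\omega_i)/(\omega_i-\bar\omega_i^{thr})+v_i\}$ if $\omega_i>\bar\omega_i^{thr}$, $0$ if $\underline\omega_i^{thr}\leqslant\omega_i\leqslant\bar\omega_i^{thr}$, $\max\{0,\underline\gamma_i(\underline\omega_i-\omega_i)/(\underline\omega_i^{thr}-\omega_i)+v_i\}$ if $\omega_i<\underline\omega_i^{thr}$; $\alpha_{DF,i}\equiv0$ for $i\notin\mathcal{I}_\omega$. Total control $\alpha=\alpha_{DF}+\alpha_{MPC}$. *)

theory Defs
  imports "HOL-Analysis.Analysis"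
begin

text \<open>Nodes have an arbitrary type 'v; the node set is nodes, the oriented edges are
  pairs (i,j) meaning i is the positive end (tail) of the edge.  The incidence matrix
  is D(e,i) = 1 if i is the tail of e, -1 if i is its head, 0 otherwise.\<close>

record 'v sys =
  nodes :: "'v set"
  edges :: "('v \<times> 'v) set"
  Mi :: "'v \<Rightarrow> real"
  Ei :: "'v \<Rightarrow> real"
  yb :: "'v \<times> 'v \<Rightarrow> real" \<comment> \<open>diagonal entries b_ij of Y_b\<close>
  Iu :: "'v set"
  Iw :: "'v set"
  Ts :: real                  \<comment> \<open>MPC step T\<close>
  th :: real                  \<comment> \<open>horizon length t-tilde\<close>
  cc :: "'v \<Rightarrow> real"
  dd :: real
  eps :: "'v \<Rightarrow> real"
  Tc :: "'v \<Rightarrow> real"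
  wlo :: "'v \<Rightarrow> real"       \<comment> \<open>lower frequency bound\<close>
  whi :: "'v \<Rightarrow> real"       \<comment> \<open>upper frequency bound\<close>
  glo :: "'v \<Rightarrow> real"
  ghi :: "'v \<Rightarrow> real"
  thlo :: "'v \<Rightarrow> real"      \<comment> \<open>lower threshold\<close>
  thhi :: "'v \<Rightarrow> real"      \<comment> \<open>upper threshold\<close>

text \<open>(D^T f)_i computed over an edge set F.\<close>
definition flow_out :: "('v \<times> 'v) set \<Rightarrow> ('v \<times> 'v \<Rightarrow> real) \<Rightarrow> 'v \<Rightarrow> real" where
  "flow_out F f i = (\<Sum>e\<in>{e\<in>F. fst e = i}. f e) - (\<Sum>e\<in>{e\<in>F. snd e = i}. f e)"

definition connected_oriented_graph :: "'v set \<Rightarrow> ('v \<times> 'v) set \<Rightarrow> bool" where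
  "connected_oriented_graph V E \<longleftrightarrow> finite V \<and> V \<noteq> {} \<and> E \<subseteq> V \<times> V
     \<and> (\<forall>(i,j)\<in>E. i \<noteq> j \<and> (j,i) \<notin> E)
     \<and> (\<forall>i\<in>V. \<forall>j\<in>V. (i,j) \<in> (E \<union> E\<inverse>)\<^sup>*)"

definition piecewise_cont :: "real set \<Rightarrow> (real \<Rightarrow> real) \<Rightarrow> bool" where
  "piecewise_cont A g \<longleftrightarrow> (\<exists>S. (\<forall>a b. finite (S \<inter> {a..b}))
     \<and> (\<forall>t\<in>A - S. continuous (at t within A) g)
     \<and> (\<forall>t\<in>A \<inter> S. (\<exists>l. (g \<longlongrightarrow> l) (at t within (A \<inter> {..<t})))
                 \<and> (\<exists>l. (g \<longlongrightarrow> l) (at t within (A \<inter> {t<..})))))"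

definition horizon :: "'v sys \<Rightarrow> nat" where
  "horizon S = nat \<lceil>th S / Ts S\<rceil>"

text \<open>Predicted trajectory (f-hat, omega-hat, alpha-hat) of the MPC problem for the graph with
  edge set F, control set Ju, forecast P (P k = p-hat(k)), constant input u and initial data.\<close>
fun pred_traj :: "'v sys \<Rightarrow> ('v \<times> 'v) set \<Rightarrow> 'v set \<Rightarrow> (nat \<Rightarrow> 'v \<Rightarrow> real)
    \<Rightarrow> ('v \<times> 'v \<Rightarrow> real) \<Rightarrow> ('v \<Rightarrow> real) \<Rightarrow> ('v \<Rightarrow> real) \<Rightarrow> ('v \<Rightarrow> real) \<Rightarrow> nat
    \<Rightarrow> ('v \<times> 'v \<Rightarrow> real) \<times> ('v \<Rightarrow> real) \<times> ('v \<Rightarrow> real)" where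
  "pred_traj S F Ju P f0 w0 a0 u 0 = (f0, w0, a0)"
| "pred_traj S F Ju P f0 w0 a0 u (Suc k) =
     (let (f, w, a) = pred_traj S F Ju P f0 w0 a0 u k in
       (\<lambda>e. if e \<in> F then f e + Ts S * yb S e * (w (fst e) - w (snd e)) else f e,
        \<lambda>i. w i + Ts S * (- Ei S i * w i - flow_out F f i + P k i + u i) / Mi S i,
        \<lambda>i. if i \<in> Ju then a i + Ts S * (- a i / Tc S i - w i + u i) else 0))"

definition mpc_feasible :: "'v sys \<Rightarrow> ('v \<times> 'v) set \<Rightarrow> 'v set \<Rightarrow> 'v set \<Rightarrow> (nat \<Rightarrow> 'v \<Rightarrow> real)
    \<Rightarrow> ('v \<times> 'v \<Rightarrow> real) \<Rightarrow> ('v \<Rightarrow> real) \<Rightarrow> ('v \<Rightarrow> real) \<Rightarrow> ('v \<Rightarrow> real) \<Rightarrow> real \<Rightarrow> bool" where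
  "mpc_feasible S F Ju Jw P f0 w0 a0 u \<beta> \<longleftrightarrow>
     (\<forall>i. i \<notin> Ju \<longrightarrow> u i = 0)
     \<and> (\<forall>k < horizon S. \<forall>i\<in>Jw.
          wlo S i - \<beta> \<le> fst (snd (pred_traj S F Ju P f0 w0 a0 u (Suc k))) i
        \<and> fst (snd (pred_traj S F Ju P f0 w0 a0 u (Suc k))) i \<le> whi S i + \<beta>)
     \<and> (\<forall>i\<in>Ju. \<bar>u i\<bar> \<le> eps S i * \<bar>a0 i\<bar>)"

definition mpc_cost :: "'v sys \<Rightarrow> 'v set \<Rightarrow> ('v \<Rightarrow> real) \<Rightarrow> real \<Rightarrow> real" where
  "mpc_cost S Ju u \<beta> = (\<Sum>i\<in>Ju. cc S i * (u i)\<^sup>2) + dd S * \<beta>\<^sup>2"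

text \<open>u-hat-star: the u-part of the unique minimizer.\<close>
definition mpc_u :: "'v sys \<Rightarrow> ('v \<times> 'v) set \<Rightarrow> 'v set \<Rightarrow> 'v set \<Rightarrow> (nat \<Rightarrow> 'v \<Rightarrow> real)
    \<Rightarrow> ('v \<times> 'v \<Rightarrow> real) \<Rightarrow> ('v \<Rightarrow> real) \<Rightarrow> ('v \<Rightarrow> real) \<Rightarrow> 'v \<Rightarrow> real" where
  "mpc_u S F Ju Jw P f0 w0 a0 =
     (THE u. \<exists>\<beta>. mpc_feasible S F Ju Jw P f0 w0 a0 u \<beta>
        \<and> (\<forall>u' \<beta>'. mpc_feasible S F Ju Jw P f0 w0 a0 u' \<beta>'
              \<longrightarrow> mpc_cost S Ju u \<beta> \<le> mpc_cost S Ju u' \<beta>'))"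

definition samp_index :: "(nat \<Rightarrow> real) \<Rightarrow> real \<Rightarrow> nat" where
  "samp_index \<Delta> t = (THE j. \<Delta> j \<le> t \<and> t < \<Delta> (Suc j))"

definition region_of :: "nat \<Rightarrow> (nat \<Rightarrow> 'v set) \<Rightarrow> 'v \<Rightarrow> nat" where
  "region_of r Reg i = (THE \<beta>. \<beta> \<in> {1..r} \<and> i \<in> Reg \<beta>)"

definition boundary_edges :: "'v sys \<Rightarrow> 'v set \<Rightarrow> ('v \<times> 'v) set" where
  "boundary_edges S R = {e \<in> edges S. (fst e \<in> R) \<noteq> (snd e \<in> R)}"

text \<open>p^{fcst,f}: net inflow over boundary edges (j -> i means j is the tail).\<close>
definition p_flow :: "'v sys \<Rightarrow> 'v set \<Rightarrow> ('v \<times> 'v \<Rightarrow> real) \<Rightarrow> 'v \<Rightarrow> real" where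
  "p_flow S R f i = (\<Sum>e\<in>{e\<in>boundary_edges S R. snd e = i}. f e)
                  - (\<Sum>e\<in>{e\<in>boundary_edges S R. fst e = i}. f e)"

text \<open>Distributed MPC input u_MPC,i(t).  Delta b j = j-th sampling time of region b;
  fc b j = forecast p^{fcst}_{Delta b j, b} (a function of tau and the node).\<close>
definition u_mpc :: "'v sys \<Rightarrow> nat \<Rightarrow> (nat \<Rightarrow> 'v set) \<Rightarrow> (nat \<Rightarrow> nat \<Rightarrow> real)
    \<Rightarrow> (nat \<Rightarrow> nat \<Rightarrow> real \<Rightarrow> 'v \<Rightarrow> real)
    \<Rightarrow> (real \<Rightarrow> 'v \<times> 'v \<Rightarrow> real) \<Rightarrow> (real \<Rightarrow> 'v \<Rightarrow> real) \<Rightarrow> (real \<Rightarrow> 'v \<Rightarrow> real)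
    \<Rightarrow> real \<Rightarrow> 'v \<Rightarrow> real" where
  "u_mpc S r Reg \<Delta> fc f w aM t i =
     (if i \<in> Iu S then
        (let b = region_of r Reg i;
             j = samp_index (\<Delta> b) t;
             t0 = \<Delta> b j;
             R = Reg b;
             F = edges S \<inter> (R \<times> R);
             P = (\<lambda>k l. if l \<in> R then fc b j (t0 + real k * Ts S) l + p_flow S R (f t0) l else 0)
         in mpc_u S F (Iu S \<inter> R) (Iw S \<inter> R) P
              (\<lambda>e. if e \<in> F then f t0 e else 0)
              (\<lambda>l. if l \<in> R then w t0 l else 0)
              (\<lambda>l. if l \<in> R then aM t0 l else 0) i)
      else 0)"

definition clamp_u :: "'v sys \<Rightarrow> 'v \<Rightarrow> real \<Rightarrow> real \<Rightarrow> real" where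
  "clamp_u S i a u = max (- (eps S i * \<bar>a\<bar>)) (min (eps S i * \<bar>a\<bar>) u)"

definition alpha_df :: "'v sys \<Rightarrow> (real \<Rightarrow> 'v \<Rightarrow> real)
    \<Rightarrow> (real \<Rightarrow> 'v \<times> 'v \<Rightarrow> real) \<Rightarrow> (real \<Rightarrow> 'v \<Rightarrow> real) \<Rightarrow> (real \<Rightarrow> 'v \<Rightarrow> real)
    \<Rightarrow> real \<Rightarrow> 'v \<Rightarrow> real" where
  "alpha_df S p f w aM t i =
     (if i \<in> Iw S then
        (let v = Ei S i * w t i + flow_out (edges S) (f t) i - p t i - aM t i in
         if w t i > thhi S i then min 0 (ghi S i * (whi S i - w t i) / (w t i - thhi S i) + v)
         else if w t i < thlo S i then max 0 (glo S i * (wlo S i - w t i) / (thlo S i - w t i) + v)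
         else 0)
      else 0)"

definition closed_loop_solution :: "'v sys \<Rightarrow> nat \<Rightarrow> (nat \<Rightarrow> 'v set) \<Rightarrow> (nat \<Rightarrow> nat \<Rightarrow> real)
    \<Rightarrow> (nat \<Rightarrow> nat \<Rightarrow> real \<Rightarrow> 'v \<Rightarrow> real) \<Rightarrow> (real \<Rightarrow> 'v \<Rightarrow> real)
    \<Rightarrow> (real \<Rightarrow> 'v \<times> 'v \<Rightarrow> real) \<Rightarrow> (real \<Rightarrow> 'v \<Rightarrow> real) \<Rightarrow> (real \<Rightarrow> 'v \<Rightarrow> real) \<Rightarrow> bool" where
  "closed_loop_solution S r Reg \<Delta> fc p f w aM \<longleftrightarrow>
     (\<forall>e\<in>edges S. continuous_on {0..} (\<lambda>t. f t e))
     \<and> (\<forall>i\<in>nodes S. continuous_on {0..} (\<lambda>t. w t i))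
     \<and> (\<forall>i\<in>nodes S. continuous_on {0..} (\<lambda>t. aM t i))
     \<and> (\<forall>i. i \<notin> Iu S \<longrightarrow> (\<forall>t\<ge>0. aM t i = 0))
     \<and> (\<exists>X. countable X \<and> (\<forall>t>0. t \<notin> X \<longrightarrow>
          (\<forall>e\<in>edges S. ((\<lambda>s. f s e) has_real_derivative
                yb S e * (w t (fst e) - w t (snd e))) (at t))
        \<and> (\<forall>i\<in>nodes S. ((\<lambda>s. w s i) has_real_derivative
                (- Ei S i * w t i - flow_out (edges S) (f t) i + p t i
                 + (alpha_df S p f w aM t i + aM t i)) / Mi S i) (at t))
        \<and> (\<forall>i\<in>Iu S. ((\<lambda>s. aM s i) has_real_derivative
                (- aM t i / Tc S i - w t i
                 + clamp_u S i (aM t i) (u_mpc S r Reg \<Delta> fc f w aM t i))) (at t))))"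

definition open_loop_solution :: "'v sys \<Rightarrow> (real \<Rightarrow> 'v \<Rightarrow> real)
    \<Rightarrow> (real \<Rightarrow> 'v \<times> 'v \<Rightarrow> real) \<Rightarrow> (real \<Rightarrow> 'v \<Rightarrow> real) \<Rightarrow> bool" where
  "open_loop_solution S p f w \<longleftrightarrow>
     (\<forall>e\<in>edges S. continuous_on {0..} (\<lambda>t. f t e))
     \<and> (\<forall>i\<in>nodes S. continuous_on {0..} (\<lambda>t. w t i))
     \<and> (\<exists>X. countable X \<and> (\<forall>t>0. t \<notin> X \<longrightarrow>
          (\<forall>e\<in>edges S. ((\<lambda>s. f s e) has_real_derivative
                yb S e * (w t (fst e) - w t (snd e))) (at t))
        \<and> (\<forall>i\<in>nodes S. ((\<lambda>s. w s i) has_real_derivative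
                (- Ei S i * w t i - flow_out (edges S) (f t) i + p t i) / Mi S i) (at t))))"

end

theory Submission
  imports Defs
begin

lemma mono_countable:
  fixes g g' :: "real \<Rightarrow> real"
  assumes ab0: "a \<le> b" and cont: "continuous_on {a..b} g" and cX: "countable X"
    and der: "\<And>t. a < t \<Longrightarrow> t < b \<Longrightarrow> t \<notin> X \<Longrightarrow> (g has_real_derivative g' t) (at t)"
    and pos: "\<And>t. a < t \<Longrightarrow> t < b \<Longrightarrow> t \<notin> X \<Longrightarrow> g' t \<ge> 0"
  shows "g a \<le> g b"
proof (rule ccontr)
  assume "\<not> g a \<le> g b"
  hence lt: "g b < g a" by simp
  have ab: "a < b" using ab0 lt by (cases "a = b") auto
  define k where "k = (g a - g b) / (2*(b - a))"
  have k: "k > 0" using ab lt by (simp add: k_def)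
  define h where "h t = g t + k*(t - a)" for t
  have kb: "k*(b-a) = (g a - g b)/2" using ab by (simp add: k_def field_simps)
  have hb: "h b < h a" using lt kb by (simp add: h_def)
  have hc: "continuous_on {a..b} h" unfolding h_def by (intro continuous_intros cont)
  define T where "T y = Sup {t\<in>{a..b}. y \<le> h t}" for y
  have key: "T y \<in> X \<and> h (T y) = y" if y: "h b < y" "y < h a" for y
  proof -
    let ?A = "{t\<in>{a..b}. y \<le> h t}"
    have Aeq: "?A = {a..b} \<inter> h -` {y..}" by auto
    have clA: "closed ?A" unfolding Aeq by (rule continuous_closed_preimage[OF hc]) auto
    have neA: "?A \<noteq> {}" using y ab by (intro ex_in_conv[THEN iffD1] exI[of _ a]) auto
    have bdA: "bdd_above ?A" by (rule bdd_aboveI[of _ b]) auto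
    have TA: "T y \<in> ?A" unfolding T_def by (rule closed_contains_Sup[OF neA bdA clA])
    have up: "t \<le> T y" if "t \<in> ?A" for t unfolding T_def by (rule cSup_upper[OF that bdA])
    have Tb: "T y < b" using TA y by (cases "T y = b") auto
    have after: "h t < y" if "T y < t" "t \<le> b" for t
      using up[of t] that TA by (cases "y \<le> h t") auto
    have hT: "h (T y) = y"
    proof (rule ccontr)
      assume "h (T y) \<noteq> y"
      hence gt: "h (T y) > y" using TA by auto
      obtain d where d: "d > 0" "\<forall>x'\<in>{a..b}. dist x' (T y) < d \<longrightarrow> dist (h x') (h (T y)) < h (T y) - y"
        using hc TA gt unfolding continuous_on_iff by (metis (no_types, lifting) diff_gt_0_iff_gt mem_Collect_eq)
      define t where "t = min b (T y + d/2)"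
      have t1: "T y < t" "t \<le> b" using Tb d by (auto simp: t_def)
      have "dist t (T y) < d" using t1 d by (auto simp: t_def dist_real_def)
      hence "dist (h t) (h (T y)) < h (T y) - y" using d t1 TA by auto
      hence "h t > y" by (auto simp: dist_real_def)
      with after[OF t1] show False by simp
    qed
    have Ta: "a < T y" using TA hT y by (cases "T y = a") auto
    show ?thesis
    proof (rule conjI[OF _ hT], rule ccontr)
      assume nX: "T y \<notin> X"
      have "(h has_real_derivative g' (T y) + k) (at (T y))"
        unfolding h_def by (auto intro!: derivative_eq_intros der[OF Ta Tb nX])
      moreover have "g' (T y) + k > 0" using pos[OF Ta Tb nX] k by simp
      ultimately obtain d where d: "d > 0" "\<forall>s>0. s < d \<longrightarrow> h (T y) < h (T y + s)"
        using DERIV_pos_inc_right by blast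
      define s where "s = min (d/2) ((b - T y)/2)"
      have s1: "s \<le> (b - T y)/2" "s \<le> d/2" unfolding s_def by (rule min.cobounded2, rule min.cobounded1)
      have s: "s > 0" "s < d" "T y + s \<le> b" using d Tb s1 by (auto simp: s_def)
      have "h (T y + s) > y" using d s hT by auto
      with after[of "T y + s"] s show False by simp
    qed
  qed
  have inj: "inj_on T {h b<..<h a}"
    by (rule inj_onI) (metis key greaterThanLessThan_iff)
  have "T ` {h b<..<h a} \<subseteq> X" using key by auto
  hence "countable (T ` {h b<..<h a})" using cX countable_subset by blast
  hence "countable {h b<..<h a}" using countable_image_inj_on inj by blast
  with uncountable_open_interval[of "h b" "h a"] hb show False by simp
qed

lemma deriv_le:
  fixes g g' :: "real \<Rightarrow> real"
  assumes ab0: "a \<le> b" and cont: "continuous_on {a..b} g" and cX: "countable X"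
    and der: "\<And>t. a < t \<Longrightarrow> t < b \<Longrightarrow> t \<notin> X \<Longrightarrow> (g has_real_derivative g' t) (at t)"
    and bd: "\<And>t. a < t \<Longrightarrow> t < b \<Longrightarrow> t \<notin> X \<Longrightarrow> g' t \<le> B"
  shows "g b - g a \<le> B * (b - a)"
proof -
  have "(\<lambda>t. B*t - g t) a \<le> (\<lambda>t. B*t - g t) b"
    by (rule mono_countable[OF ab0 _ cX, where g'="\<lambda>t. B - g' t"])
       (auto intro!: continuous_intros cont derivative_eq_intros der simp: bd)
  thus ?thesis by (simp add: algebra_simps)
qed

lemma deriv_ge:
  fixes g g' :: "real \<Rightarrow> real"
  assumes ab0: "a \<le> b" and cont: "continuous_on {a..b} g" and cX: "countable X"
    and der: "\<And>t. a < t \<Longrightarrow> t < b \<Longrightarrow> t \<notin> X \<Longrightarrow> (g has_real_derivative g' t) (at t)"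
    and bd: "\<And>t. a < t \<Longrightarrow> t < b \<Longrightarrow> t \<notin> X \<Longrightarrow> B \<le> g' t"
  shows "B * (b - a) \<le> g b - g a"
proof -
  have "(\<lambda>t. g t - B*t) a \<le> (\<lambda>t. g t - B*t) b"
    by (rule mono_countable[OF ab0 _ cX, where g'="\<lambda>t. g' t - B"])
       (auto intro!: continuous_intros cont derivative_eq_intros der simp: bd)
  thus ?thesis by (simp add: algebra_simps)
qed

lemma deriv_abs:
  fixes g g' :: "real \<Rightarrow> real"
  assumes ab0: "a \<le> b" and cont: "continuous_on {a..b} g" and cX: "countable X"
    and der: "\<And>t. a < t \<Longrightarrow> t < b \<Longrightarrow> t \<notin> X \<Longrightarrow> (g has_real_derivative g' t) (at t)"
    and bd: "\<And>t. a < t \<Longrightarrow> t < b \<Longrightarrow> t \<notin> X \<Longrightarrow> \<bar>g' t\<bar> \<le> B"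
  shows "\<bar>g b - g a\<bar> \<le> B * (b - a)"
proof -
  have "g b - g a \<le> B * (b - a)"
  proof (rule deriv_le[OF ab0 cont cX der])
    fix t assume "a < t" "t < b" "t \<notin> X"
    thus "g' t \<le> B" using bd[of t] by (simp add: abs_le_iff)
  qed
  moreover have "(-B) * (b - a) \<le> g b - g a"
  proof (rule deriv_ge[OF ab0 cont cX der])
    fix t assume "a < t" "t < b" "t \<notin> X"
    thus "-B \<le> g' t" using bd[of t] by (simp add: abs_le_iff)
  qed
  ultimately show ?thesis by (simp add: abs_le_iff)
qed

lemma energy_tendsto:
  fixes V V' g g' :: "real \<Rightarrow> real"
  assumes cX: "countable X"
    and Vc: "continuous_on {a..} V" and gc: "continuous_on {a..} g"
    and Vd: "\<And>t. a < t \<Longrightarrow> t \<notin> X \<Longrightarrow> (V has_real_derivative V' t) (at t)"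
    and gd: "\<And>t. a < t \<Longrightarrow> t \<notin> X \<Longrightarrow> (g has_real_derivative g' t) (at t)"
    and V'le: "\<And>t. a < t \<Longrightarrow> t \<notin> X \<Longrightarrow> V' t \<le> - c * (g t)\<^sup>2"
    and c: "c > 0" and Vnn: "\<And>t. t \<ge> a \<Longrightarrow> V t \<ge> 0"
    and gB: "\<And>t. a < t \<Longrightarrow> t \<notin> X \<Longrightarrow> \<bar>g' t\<bar> \<le> B"
  shows "(g \<longlongrightarrow> 0) at_top"
proof -
  have V'0: "V' t \<le> 0" if "a < t" "t \<notin> X" for t
  proof -
    have "c*(g t)\<^sup>2 \<ge> 0" using c by simp
    thus ?thesis using V'le[OF that] by linarith
  qed
  have Vmono: "V t \<le> V s" if "a \<le> s" "s \<le> t" for s t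
  proof -
    have "V t - V s \<le> 0 * (t - s)"
      by (rule deriv_le[OF that(2) continuous_on_subset[OF Vc] cX, where g'=V'])
         (use that in \<open>auto intro: Vd V'0\<close>)
    thus ?thesis by simp
  qed
  define L where "L = Inf (V ` {a..})"
  have bdb: "bdd_below (V ` {a..})" using Vnn by (intro bdd_belowI[of _ 0]) auto
  have Lle: "L \<le> V t" if "t \<ge> a" for t unfolding L_def by (rule cInf_lower) (use that bdb in auto)
  show ?thesis
  proof (rule tendstoI)
    fix \<delta> :: real assume \<delta>: "\<delta> > 0"
    define B1 where "B1 = \<bar>B\<bar> + 1"
    have B1: "B1 > 0" "B \<le> B1" by (auto simp: B1_def)
    define h where "h = \<delta> / (2*B1)"
    have h: "h > 0" using \<delta> B1 by (simp add: h_def)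
    define \<eta> where "\<eta> = c * (\<delta>/2)\<^sup>2 * h"
    have \<eta>: "\<eta> > 0" using c \<delta> h by (simp add: \<eta>_def)
    have "L < L + \<eta>/2" using \<eta> by simp
    hence "\<exists>x\<in>V ` {a..}. x < L + \<eta>/2"
      using cInf_less_iff[of "V ` {a..}" "L + \<eta>/2"] bdb unfolding L_def by auto
    then obtain T0 where T0: "T0 \<ge> a" "V T0 < L + \<eta>/2" by auto
    show "\<forall>\<^sub>F t in at_top. dist (g t) 0 < \<delta>"
      unfolding eventually_at_top_linorder
    proof (intro exI[of _ T0] allI impI)
      fix t assume t: "t \<ge> T0"
      show "dist (g t) 0 < \<delta>"
      proof (rule ccontr)
        assume "\<not> dist (g t) 0 < \<delta>"
        hence gt: "\<bar>g t\<bar> \<ge> \<delta>" by simp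
        have near: "\<bar>g s\<bar> \<ge> \<delta>/2" if s: "t \<le> s" "s \<le> t + h" for s
        proof -
          have "\<bar>g s - g t\<bar> \<le> B * (s - t)"
            by (rule deriv_abs[OF s(1) continuous_on_subset[OF gc] cX, where g'=g'])
               (use s T0 t in \<open>auto intro: gd gB\<close>)
          also have "\<dots> \<le> B1 * (s - t)" using s B1 by (intro mult_right_mono) auto
          also have "\<dots> \<le> B1 * h" using s B1 by (intro mult_left_mono) auto
          also have "\<dots> = \<delta>/2" using B1 by (simp add: h_def field_simps)
          finally show ?thesis using gt by linarith
        qed
        have "V (t + h) - V t \<le> (- c * (\<delta>/2)\<^sup>2) * ((t + h) - t)"
        proof (rule deriv_le[OF _ continuous_on_subset[OF Vc] cX, where g'=V'])
          show "t \<le> t + h" using h by simp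
          show "{t..t + h} \<subseteq> {a..}" using t T0 by auto
          fix s assume s: "t < s" "s < t + h" "s \<notin> X"
          show "(V has_real_derivative V' s) (at s)" using s t T0 by (intro Vd) auto
          have "(\<delta>/2)\<^sup>2 \<le> (g s)\<^sup>2"
          proof -
            have "(\<delta>/2)\<^sup>2 \<le> \<bar>g s\<bar>\<^sup>2" using near[of s] s \<delta> by (intro power_mono) auto
            thus ?thesis by simp
          qed
          hence "- c * (g s)\<^sup>2 \<le> - c * (\<delta>/2)\<^sup>2" using c by simp
          with V'le[of s] s t T0 show "V' s \<le> - c * (\<delta>/2)\<^sup>2" by fastforce
        qed
        hence "V (t + h) - V t \<le> - \<eta>" by (simp add: \<eta>_def)
        moreover have "V t \<le> V T0" using Vmono T0 t by auto
        moreover have "L \<le> V (t + h)" using Lle t T0 h by auto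
        ultimately show False using T0 \<eta> by linarith
      qed
    qed
  qed
qed

lemma slow_tendsto:
  fixes g g' h :: "real \<Rightarrow> real"
  assumes cX: "countable X" and gc: "continuous_on {a..} g" and g0: "(g \<longlongrightarrow> 0) at_top"
    and gd: "\<And>t. a < t \<Longrightarrow> t \<notin> X \<Longrightarrow> (g has_real_derivative g' t) (at t)"
    and close: "\<And>\<epsilon>. \<epsilon> > 0 \<Longrightarrow> eventually (\<lambda>t. t \<notin> X \<longrightarrow> \<bar>g' t - h t\<bar> \<le> \<epsilon>) at_top"
    and win: "\<And>\<epsilon>. \<epsilon> > 0 \<Longrightarrow> eventually (\<lambda>t. \<forall>s\<in>{t..t+1}. \<bar>h s - h t\<bar> \<le> \<epsilon>) at_top"
  shows "(h \<longlongrightarrow> 0) at_top"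
proof (rule tendstoI)
  fix e :: real assume e: "e > 0"
  obtain N1 where N1: "\<And>s. s \<ge> N1 \<Longrightarrow> s \<notin> X \<Longrightarrow> \<bar>g' s - h s\<bar> \<le> e/4"
    using close[of "e/4"] e unfolding eventually_at_top_linorder by auto
  obtain N2 where N2': "\<forall>t\<ge>N2. \<forall>s\<in>{t..t+1}. \<bar>h s - h t\<bar> \<le> e/4"
    using win[of "e/4"] e unfolding eventually_at_top_linorder by auto
  have N2: "\<bar>h s - h t\<bar> \<le> e/4" if "t \<ge> N2" "s \<in> {t..t+1}" for t s using N2' that by blast
  obtain N3 where N3: "\<And>t. t \<ge> N3 \<Longrightarrow> \<bar>g t\<bar> < e/8"
    using g0[THEN tendstoD, of "e/8"] e unfolding eventually_at_top_linorder by auto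
  show "\<forall>\<^sub>F t in at_top. dist (h t) 0 < e"
    unfolding eventually_at_top_linorder
  proof (intro exI[of _ "max (max N1 N2) (max N3 a)"] allI impI)
    fix t assume t: "t \<ge> max (max N1 N2) (max N3 a)"
    have cc: "continuous_on {t..t+1} g" by (rule continuous_on_subset[OF gc]) (use t in auto)
    have dd: "(g has_real_derivative g' s) (at s)" if "t < s" "s < t+1" "s \<notin> X" for s
      using that t by (intro gd) auto
    have bnd: "\<bar>g' s - h t\<bar> \<le> e/2" if "t < s" "s < t+1" "s \<notin> X" for s
    proof -
      have "\<bar>g' s - h s\<bar> \<le> e/4" using N1[of s] that t by auto
      moreover have "\<bar>h s - h t\<bar> \<le> e/4" using N2[of t s] that t by auto
      ultimately show ?thesis by linarith
    qed
    have "g (t+1) - g t \<le> (h t + e/2) * ((t+1) - t)"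
    proof (rule deriv_le[OF _ cc cX dd])
      fix s assume "t < s" "s < t + 1" "s \<notin> X"
      from bnd[OF this] show "g' s \<le> h t + e/2" by linarith
    qed auto
    moreover have "(h t - e/2) * ((t+1) - t) \<le> g (t+1) - g t"
    proof (rule deriv_ge[OF _ cc cX dd])
      fix s assume "t < s" "s < t + 1" "s \<notin> X"
      from bnd[OF this] show "h t - e/2 \<le> g' s" by linarith
    qed auto
    moreover have "\<bar>g t\<bar> < e/8" "\<bar>g (t+1)\<bar> < e/8" using N3 t by auto
    ultimately have "h t < e" "- h t < e" by (simp_all add: abs_less_iff)
    thus "dist (h t) 0 < e" by (simp add: dist_real_def abs_less_iff)
  qed
qed

lemma finite_subseq:
  fixes x :: "nat \<Rightarrow> 'a \<Rightarrow> real"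
  assumes "finite E" and "\<And>n e. e \<in> E \<Longrightarrow> \<bar>x n e\<bar> \<le> B"
  shows "\<exists>r. strict_mono r \<and> (\<forall>e\<in>E. convergent (\<lambda>n. x (r n) e))"
  using assms
proof (induction E rule: finite_induct)
  case empty
  show ?case by (intro exI[of _ id]) (auto simp: strict_mono_def)
next
  case (insert e0 E)
  then obtain r where r: "strict_mono r" "\<forall>e\<in>E. convergent (\<lambda>n. x (r n) e)" by auto
  obtain r2 where r2: "strict_mono r2" "monoseq (\<lambda>n. x (r (r2 n)) e0)"
    using seq_monosub[of "\<lambda>n. x (r n) e0"] by auto
  have "Bseq (\<lambda>n. x (r (r2 n)) e0)"
    using insert.prems by (intro BseqI'[of _ B]) auto
  hence c0: "convergent (\<lambda>n. x (r (r2 n)) e0)" using Bseq_monoseq_convergent r2 by blast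
  have "convergent (\<lambda>n. x (r (r2 n)) e)" if "e \<in> E" for e
    using convergent_subseq_convergent[OF r(2)[rule_format, OF that] r2(1)] by (simp add: comp_def)
  with c0 show ?case using r r2 by (intro exI[of _ "r \<circ> r2"]) (auto intro: strict_mono_o[unfolded comp_def])
qed

lemma mult_sum_if: "(r::real) * (\<Sum>e\<in>E. if P e then g e else 0) = (\<Sum>e\<in>E. if P e then r * g e else 0)"
  unfolding sum_distrib_left by (rule sum.cong) auto

lemma sum_fst_swap:
  fixes w :: "'a \<Rightarrow> real"
  assumes fin: "finite N" "finite E" and sub: "\<And>e. e \<in> E \<Longrightarrow> fst e \<in> N"
  shows "(\<Sum>i\<in>N. w i * (\<Sum>e\<in>{e\<in>E. fst e = i}. g e)) = (\<Sum>e\<in>E. w (fst e) * g e)"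
proof -
  have "(\<Sum>i\<in>N. w i * (\<Sum>e\<in>{e\<in>E. fst e = i}. g e))
      = (\<Sum>i\<in>N. \<Sum>e\<in>E. if fst e = i then w i * g e else 0)"
    using fin by (simp add: sum.inter_filter mult_sum_if)
  also have "\<dots> = (\<Sum>e\<in>E. \<Sum>i\<in>N. if fst e = i then w i * g e else 0)" by (rule sum.swap)
  also have "\<dots> = (\<Sum>e\<in>E. w (fst e) * g e)"
    using fin sub by (intro sum.cong refl) (simp add: sum.delta)
  finally show ?thesis .
qed

lemma sum_snd_swap:
  fixes w :: "'a \<Rightarrow> real"
  assumes fin: "finite N" "finite E" and sub: "\<And>e. e \<in> E \<Longrightarrow> snd e \<in> N"
  shows "(\<Sum>i\<in>N. w i * (\<Sum>e\<in>{e\<in>E. snd e = i}. g e)) = (\<Sum>e\<in>E. w (snd e) * g e)"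
proof -
  have "(\<Sum>i\<in>N. w i * (\<Sum>e\<in>{e\<in>E. snd e = i}. g e))
      = (\<Sum>i\<in>N. \<Sum>e\<in>E. if snd e = i then w i * g e else 0)"
    using fin by (simp add: sum.inter_filter mult_sum_if)
  also have "\<dots> = (\<Sum>e\<in>E. \<Sum>i\<in>N. if snd e = i then w i * g e else 0)" by (rule sum.swap)
  also have "\<dots> = (\<Sum>e\<in>E. w (snd e) * g e)"
    using fin sub by (intro sum.cong refl) (simp add: sum.delta)
  finally show ?thesis .
qed

lemma flow_sum:
  fixes w :: "'a \<Rightarrow> real"
  assumes fin: "finite N" "finite E" and sub: "E \<subseteq> N \<times> N"
  shows "(\<Sum>e\<in>E. g e * (w (fst e) - w (snd e))) = (\<Sum>i\<in>N. w i * flow_out E g i)"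
proof -
  have "(\<Sum>i\<in>N. w i * flow_out E g i)
     = (\<Sum>i\<in>N. w i * (\<Sum>e\<in>{e\<in>E. fst e = i}. g e)) - (\<Sum>i\<in>N. w i * (\<Sum>e\<in>{e\<in>E. snd e = i}. g e))"
    by (simp add: flow_out_def right_diff_distrib sum_subtractf)
  also have "\<dots> = (\<Sum>e\<in>E. w (fst e) * g e) - (\<Sum>e\<in>E. w (snd e) * g e)"
  proof -
    have "(\<Sum>i\<in>N. w i * (\<Sum>e\<in>{e\<in>E. fst e = i}. g e)) = (\<Sum>e\<in>E. w (fst e) * g e)"
      by (rule sum_fst_swap[OF fin]) (use sub in force)
    moreover have "(\<Sum>i\<in>N. w i * (\<Sum>e\<in>{e\<in>E. snd e = i}. g e)) = (\<Sum>e\<in>E. w (snd e) * g e)"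
      by (rule sum_snd_swap[OF fin]) (use sub in force)
    ultimately show ?thesis by simp
  qed
  also have "\<dots> = (\<Sum>e\<in>E. g e * (w (fst e) - w (snd e)))"
    by (simp add: sum_subtractf[symmetric] algebra_simps)
  finally show ?thesis by simp
qed

lemma flow_out_diff: "flow_out E (\<lambda>e. a e - b e) i = flow_out E a i - flow_out E b i"
  by (simp add: flow_out_def sum_subtractf)

lemma flow_out_bound:
  assumes "finite E"
  shows "\<bar>flow_out E g i\<bar> \<le> 2 * (\<Sum>e\<in>E. \<bar>g e\<bar>)"
proof -
  have a: "\<bar>\<Sum>e\<in>{e\<in>E. fst e = i}. g e\<bar> \<le> (\<Sum>e\<in>E. \<bar>g e\<bar>)"
    by (rule order.trans[OF sum_abs sum_mono2]) (use assms in auto)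
  have b: "\<bar>\<Sum>e\<in>{e\<in>E. snd e = i}. g e\<bar> \<le> (\<Sum>e\<in>E. \<bar>g e\<bar>)"
    by (rule order.trans[OF sum_abs sum_mono2]) (use assms in auto)
  show ?thesis unfolding flow_out_def using a b abs_triangle_ineq4 by (smt (verit))
qed

lemma clamp_bound: "eps S i \<ge> 0 \<Longrightarrow> \<bar>clamp_u S i a u\<bar> \<le> eps S i * \<bar>a\<bar>"
  unfolding clamp_u_def by (simp add: max_def min_def abs_le_iff)

lemma core_hi_neg:
  fixes gh th wh x :: real
  assumes "gh > 0" "th < wh" "x > wh"
  shows "gh*(wh-x)/(x-th) < 0"
proof -
  have "gh*(wh-x) < 0" using assms by (simp add: mult_pos_neg)
  moreover have "x - th > 0" using assms by simp
  ultimately show ?thesis by (simp add: divide_neg_pos)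
qed

lemma core_lo_pos:
  fixes gl tl wl x :: real
  assumes "gl > 0" "wl < tl" "x < wl"
  shows "gl*(wl-x)/(tl-x) > 0"
  using assms by simp

lemma core_hi_lb:
  fixes gh th wh x :: real
  assumes "gh > 0" "th < wh" "x > th"
  shows "gh*(wh-x)/(x-th) \<ge> - gh"
proof -
  have "gh*(wh-x)/(x-th) + gh = gh*(wh-th)/(x-th)" using assms by (simp add: field_simps)
  also have "\<dots> \<ge> 0" using assms by simp
  finally show ?thesis by simp
qed

lemma core_lo_ub:
  fixes gl tl wl x :: real
  assumes "gl > 0" "wl < tl" "x < tl"
  shows "gl*(wl-x)/(tl-x) \<le> gl"
proof -
  have "gl*(wl-x)/(tl-x) - gl = gl*(wl-tl)/(tl-x)" using assms by (simp add: field_simps)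
  also have "\<dots> \<le> 0" using assms by (simp add: divide_nonpos_pos mult_pos_neg less_imp_le)
  finally show ?thesis by simp
qed

locale wpar =
  fixes S :: "'v sys" and i :: 'v
  assumes wp: "wlo S i < thlo S i" "thlo S i < 0" "0 < thhi S i" "thhi S i < whi S i"
     "glo S i > 0" "ghi S i > 0"
begin

lemma adf_sign: "w t i * alpha_df S p f w aM t i \<le> 0"
proof (cases "i \<in> Iw S")
  case True
  show ?thesis
  proof (cases "w t i > thhi S i")
    case hi: True
    have "alpha_df S p f w aM t i \<le> 0" using True hi by (simp add: alpha_df_def Let_def)
    moreover have "w t i > 0" using hi wp by simp
    ultimately show ?thesis by (simp add: mult_nonneg_nonpos)
  next
    case nhi: False
    show ?thesis
    proof (cases "w t i < thlo S i")
      case lo: True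
      have "alpha_df S p f w aM t i \<ge> 0" using True nhi lo by (simp add: alpha_df_def Let_def)
      moreover have "w t i < 0" using lo wp by simp
      ultimately show ?thesis by (simp add: mult_nonpos_nonneg)
    next
      case False
      thus ?thesis using True nhi by (simp add: alpha_df_def Let_def)
    qed
  qed
qed (simp add: alpha_df_def)

lemma adf_zero: "thlo S i \<le> w t i \<Longrightarrow> w t i \<le> thhi S i \<Longrightarrow> alpha_df S p f w aM t i = 0"
  by (simp add: alpha_df_def Let_def)

lemma adf_bound:
  "\<bar>alpha_df S p f w aM t i\<bar>
     \<le> \<bar>Ei S i * w t i + flow_out (edges S) (f t) i - p t i - aM t i\<bar> + ghi S i + glo S i"
proof -
  define v where "v = Ei S i * w t i + flow_out (edges S) (f t) i - p t i - aM t i"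
  show ?thesis
  proof (cases "i \<in> Iw S")
    case True
    show ?thesis
    proof (cases "w t i > thhi S i")
      case hi: True
      have lb: "ghi S i * (whi S i - w t i) / (w t i - thhi S i) \<ge> - ghi S i"
        by (rule core_hi_lb) (use wp hi in auto)
      have "alpha_df S p f w aM t i = min 0 (ghi S i * (whi S i - w t i) / (w t i - thhi S i) + v)"
        using True hi by (simp add: alpha_df_def Let_def v_def)
      thus ?thesis using lb wp unfolding v_def[symmetric] by (simp add: abs_le_iff min_def) linarith?
    next
      case nhi: False
      show ?thesis
      proof (cases "w t i < thlo S i")
        case lo: True
        have ub: "glo S i * (wlo S i - w t i) / (thlo S i - w t i) \<le> glo S i"
          by (rule core_lo_ub) (use wp lo in auto)
        have "alpha_df S p f w aM t i = max 0 (glo S i * (wlo S i - w t i) / (thlo S i - w t i) + v)"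
          using True nhi lo by (simp add: alpha_df_def Let_def v_def)
        thus ?thesis using ub wp unfolding v_def[symmetric] by (simp add: abs_le_iff max_def) linarith?
      next
        case False
        thus ?thesis using True nhi wp by (simp add: alpha_df_def Let_def)
      qed
    qed
  qed (use wp in \<open>simp add: alpha_df_def\<close>)
qed

lemma num_hi:
  assumes "i \<in> Iw S" "w t i > whi S i"
  shows "- Ei S i * w t i - flow_out (edges S) (f t) i + p t i + (alpha_df S p f w aM t i + aM t i) \<le> 0"
proof -
  define v where "v = Ei S i * w t i + flow_out (edges S) (f t) i - p t i - aM t i"
  have hi: "w t i > thhi S i" using assms wp by simp
  have neg: "ghi S i * (whi S i - w t i) / (w t i - thhi S i) < 0"
    by (rule core_hi_neg) (use wp assms in auto)
  have "alpha_df S p f w aM t i = min 0 (ghi S i * (whi S i - w t i) / (w t i - thhi S i) + v)"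
    using assms hi by (simp add: alpha_df_def Let_def v_def)
  hence "- Ei S i * w t i - flow_out (edges S) (f t) i + p t i + (alpha_df S p f w aM t i + aM t i)
      = - v + min 0 (ghi S i * (whi S i - w t i) / (w t i - thhi S i) + v)"
    by (simp add: v_def)
  also have "\<dots> \<le> 0" using neg by (simp add: min_def)
  finally show ?thesis .
qed

lemma num_lo:
  assumes "i \<in> Iw S" "w t i < wlo S i"
  shows "- Ei S i * w t i - flow_out (edges S) (f t) i + p t i + (alpha_df S p f w aM t i + aM t i) \<ge> 0"
proof -
  define v where "v = Ei S i * w t i + flow_out (edges S) (f t) i - p t i - aM t i"
  have lo: "w t i < thlo S i" "\<not> w t i > thhi S i" using assms wp by auto
  have pos: "glo S i * (wlo S i - w t i) / (thlo S i - w t i) > 0"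
    by (rule core_lo_pos) (use wp assms in auto)
  have "alpha_df S p f w aM t i = max 0 (glo S i * (wlo S i - w t i) / (thlo S i - w t i) + v)"
    using assms lo by (simp add: alpha_df_def Let_def v_def)
  hence "- Ei S i * w t i - flow_out (edges S) (f t) i + p t i + (alpha_df S p f w aM t i + aM t i)
      = - v + max 0 (glo S i * (wlo S i - w t i) / (thlo S i - w t i) + v)"
    by (simp add: v_def)
  also have "\<dots> \<ge> 0" using pos by (simp add: max_def)
  finally show ?thesis .
qed

end

lemma abs_le_1_sq: "\<bar>x::real\<bar> \<le> 1 + x\<^sup>2"
proof (cases "\<bar>x\<bar> \<le> 1")
  case False
  hence "\<bar>x\<bar> * 1 \<le> \<bar>x\<bar> * \<bar>x\<bar>" by (intro mult_left_mono) auto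
  thus ?thesis by (simp add: power2_eq_square abs_mult_self_eq)
qed (simp add: add_increasing2)

lemma sum_le_member:
  fixes x :: "'a \<Rightarrow> real"
  assumes "finite A" "j \<in> A" "\<And>i. i \<in> A \<Longrightarrow> x i \<le> 0"
  shows "sum x A \<le> x j"
proof -
  have "sum x A = x j + sum x (A - {j})" using assms by (simp add: sum.remove)
  moreover have "sum x (A - {j}) \<le> 0" using assms by (intro sum_nonpos) auto
  ultimately show ?thesis by simp
qed

lemma flow_out_tendsto:
  assumes "finite E" "\<And>e. e \<in> E \<Longrightarrow> ((\<lambda>t. g t e) \<longlongrightarrow> L e) F"
  shows "((\<lambda>t. flow_out E (g t) i) \<longlongrightarrow> flow_out E L i) F"
  unfolding flow_out_def using assms by (intro tendsto_diff tendsto_sum) auto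

lemma deriv_sq:
  "(g has_real_derivative d) (at t) \<Longrightarrow> ((\<lambda>s. c * (g s)\<^sup>2) has_real_derivative c * (2 * g t * d)) (at t)"
  by (auto intro!: derivative_eq_intros)

lemma deriv_sq_shift:
  "k \<noteq> 0 \<Longrightarrow> (g has_real_derivative d) (at t) \<Longrightarrow> ((\<lambda>s. (g s - c)\<^sup>2 / k) has_real_derivative 2 * (g t - c) * d / k) (at t)"
  by (auto intro!: derivative_eq_intros)

lemma deriv_sq1:
  "(g has_real_derivative d) (at t) \<Longrightarrow> ((\<lambda>s. (g s)\<^sup>2) has_real_derivative 2 * g t * d) (at t)"
  by (auto intro!: derivative_eq_intros)

lemma abs4: "\<bar>(a::real) + b - c - d\<bar> \<le> \<bar>a\<bar> + \<bar>b\<bar> + \<bar>c\<bar> + \<bar>d\<bar>"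
  by (simp add: abs_le_iff) linarith

lemma abs2: "\<bar>- (a::real) + b\<bar> \<le> \<bar>a\<bar> + \<bar>b\<bar>"
  by (simp add: abs_le_iff) linarith

lemma cycle_const:
  fixes \<phi> :: "real \<Rightarrow> 'a \<times> 'a \<Rightarrow> real" and \<psi> :: "real \<Rightarrow> 'a \<Rightarrow> real"
  assumes finN: "finite N" and finE: "finite E" and subE: "E \<subseteq> N \<times> N"
    and kpos: "\<And>e. e \<in> E \<Longrightarrow> k e > 0"
    and cflow: "\<And>i. i \<in> N \<Longrightarrow> flow_out E c i = 0"
    and cY: "countable Y"
    and cont: "\<And>e. e \<in> E \<Longrightarrow> continuous_on {0..} (\<lambda>s. \<phi> s e)"
    and der: "\<And>\<tau> e. 0 < \<tau> \<Longrightarrow> \<tau> \<notin> Y \<Longrightarrow> e \<in> E \<Longrightarrow>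
               ((\<lambda>s. \<phi> s e) has_real_derivative k e * (\<psi> \<tau> (fst e) - \<psi> \<tau> (snd e))) (at \<tau>)"
    and t: "t \<ge> 0"
  shows "(\<Sum>e\<in>E. c e * \<phi> t e / k e) = (\<Sum>e\<in>E. c e * \<phi> 0 e / k e)"
proof -
  define Q where "Q s = (\<Sum>e\<in>E. c e * \<phi> s e / k e)" for s
  have Qc: "continuous_on {0..t} Q" unfolding Q_def
  proof (rule continuous_on_sum)
    fix e assume e: "e \<in> E"
    show "continuous_on {0..t} (\<lambda>s. c e * \<phi> s e / k e)"
      using kpos[OF e] by (intro continuous_intros continuous_on_subset[OF cont[OF e]]) auto
  qed
  have dQ: "(Q has_real_derivative 0) (at \<tau>)" if "0 < \<tau>" "\<tau> \<notin> Y" for \<tau>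
  proof -
    have "(Q has_real_derivative (\<Sum>e\<in>E. c e * (k e * (\<psi> \<tau> (fst e) - \<psi> \<tau> (snd e))) / k e)) (at \<tau>)"
      unfolding Q_def by (intro DERIV_sum DERIV_cdivide DERIV_cmult der that)
    also have "(\<Sum>e\<in>E. c e * (k e * (\<psi> \<tau> (fst e) - \<psi> \<tau> (snd e))) / k e)
        = (\<Sum>e\<in>E. c e * (\<psi> \<tau> (fst e) - \<psi> \<tau> (snd e)))"
    proof (intro sum.cong refl)
      fix e assume "e \<in> E"
      thus "c e * (k e * (\<psi> \<tau> (fst e) - \<psi> \<tau> (snd e))) / k e = c e * (\<psi> \<tau> (fst e) - \<psi> \<tau> (snd e))"
        using kpos[of e] by (simp add: field_simps)
    qed
    also have "\<dots> = (\<Sum>i\<in>N. \<psi> \<tau> i * flow_out E c i)" by (rule flow_sum[OF finN finE subE])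
    also have "\<dots> = 0" using cflow by simp
    finally show ?thesis .
  qed
  have "Q t - Q 0 \<le> 0 * (t - 0)"
    by (rule deriv_le[OF t Qc cY, where g'="\<lambda>_. 0"]) (auto intro: dQ)
  moreover have "0 * (t - 0) \<le> Q t - Q 0"
    by (rule deriv_ge[OF t Qc cY, where g'="\<lambda>_. 0"]) (auto intro: dQ)
  ultimately show ?thesis unfolding Q_def by simp
qed

theorem proposition5p1:
  fixes S :: "'v sys"
    and r :: nat and Reg :: "nat \<Rightarrow> 'v set"
    and \<Delta> :: "nat \<Rightarrow> nat \<Rightarrow> real"
    and fc :: "nat \<Rightarrow> nat \<Rightarrow> real \<Rightarrow> 'v \<Rightarrow> real"
    and p :: "real \<Rightarrow> 'v \<Rightarrow> real" and pstar :: "'v \<Rightarrow> real" and tbar :: real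
    and f :: "real \<Rightarrow> 'v \<times> 'v \<Rightarrow> real" and w aM :: "real \<Rightarrow> 'v \<Rightarrow> real"
    and finf :: "'v \<times> 'v \<Rightarrow> real"
  assumes graph: "connected_oriented_graph (nodes S) (edges S)"
    and M_pos: "\<forall>i\<in>nodes S. Mi S i > 0" and E_pos: "\<forall>i\<in>nodes S. Ei S i > 0"
    and yb_pos: "\<forall>e\<in>edges S. yb S e > 0"
    and sets: "Iw S \<subseteq> Iu S" "Iu S \<subseteq> nodes S"
    and T_pos: "Ts S > 0" and th_pos: "th S > 0" and d_pos: "dd S > 0"
    and u_params: "\<forall>i\<in>Iu S. cc S i > 0 \<and> eps S i > 0 \<and> Tc S i > 0"
    and w_params: "\<forall>i\<in>Iw S. wlo S i < thlo S i \<and> thlo S i < 0 \<and> 0 < thhi S i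
                      \<and> thhi S i < whi S i \<and> glo S i > 0 \<and> ghi S i > 0"
    and regions: "\<forall>b\<in>{1..r}. Reg b \<subseteq> nodes S"
    and cover: "Iu S \<subseteq> (\<Union>b\<in>{1..r}. Reg b)"
    and disj: "\<forall>b1\<in>{1..r}. \<forall>b2\<in>{1..r}. b1 \<noteq> b2 \<longrightarrow> Reg b1 \<inter> Reg b2 \<inter> Iu S = {}"
    and samp0: "\<forall>b\<in>{1..r}. \<Delta> b 0 = 0"
    and samp_mono: "\<forall>b\<in>{1..r}. strict_mono (\<Delta> b)"
    and samp_unb: "\<forall>b\<in>{1..r}. \<forall>t. \<exists>j. \<Delta> b j > t"
    and fc_pwc: "\<forall>b\<in>{1..r}. \<forall>j. \<forall>i\<in>Reg b.
                    piecewise_cont {\<Delta> b j .. \<Delta> b j + th S} (\<lambda>\<tau>. fc b j \<tau> i)"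
    and p_pwc: "\<forall>i\<in>nodes S. piecewise_cont {0..} (\<lambda>t. p t i)"
    and tbar: "0 \<le> tbar" "\<forall>i\<in>nodes S. \<forall>t\<ge>tbar. p t i = pstar i"
    and balance: "(\<Sum>i\<in>nodes S. pstar i) = 0"
    and epsT: "\<forall>i\<in>Iu S. eps S i * Tc S i < 1"
    and sol: "closed_loop_solution S r Reg \<Delta> fc p f w aM"
    and eq: "\<exists>fo wo. open_loop_solution S p fo wo \<and> fo 0 = f 0 \<and> wo 0 = w 0
               \<and> (\<forall>e\<in>edges S. ((\<lambda>t. fo t e) \<longlongrightarrow> finf e) at_top)
               \<and> (\<forall>i\<in>nodes S. ((\<lambda>t. wo t i) \<longlongrightarrow> 0) at_top)"
  shows "(\<forall>i\<in>Iw S. w 0 i \<in> {wlo S i .. whi S i} \<longrightarrow> (\<forall>t\<ge>0. w t i \<in> {wlo S i .. whi S i}))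
       \<and> (\<forall>i\<in>Iw S. w 0 i \<notin> {wlo S i .. whi S i} \<longrightarrow>
            (\<exists>t0. \<forall>t\<ge>t0. w t i \<in> {wlo S i .. whi S i}))
       \<and> (\<forall>e\<in>edges S. ((\<lambda>t. f t e) \<longlongrightarrow> finf e) at_top)
       \<and> (\<forall>i\<in>nodes S. ((\<lambda>t. w t i) \<longlongrightarrow> 0) at_top)
       \<and> (\<forall>i\<in>nodes S. ((\<lambda>t. alpha_df S p f w aM t i + aM t i) \<longlongrightarrow> 0) at_top)
       \<and> (\<forall>i\<in>nodes S. ((\<lambda>t. aM t i) \<longlongrightarrow> 0) at_top)
       \<and> (\<forall>i\<in>nodes S. ((\<lambda>t. alpha_df S p f w aM t i) \<longlongrightarrow> 0) at_top)"
proof -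
  define N where "N = nodes S"
  define E where "E = edges S"
  have finN: "finite N" and subE: "E \<subseteq> N \<times> N"
    using graph by (auto simp: connected_oriented_graph_def N_def E_def)
  have finE: "finite E" using finite_subset[OF subE] finN by auto
  have fstN: "fst e \<in> N" "snd e \<in> N" if "e \<in> E" for e using subE that by auto
  have IuN: "Iu S \<subseteq> N" and IwIu: "Iw S \<subseteq> Iu S" using sets by (auto simp: N_def)
  have Mp: "Mi S i > 0" if "i \<in> N" for i using M_pos that by (auto simp: N_def)
  have Ep: "Ei S i > 0" if "i \<in> N" for i using E_pos that by (auto simp: N_def)
  have ybp: "yb S e > 0" if "e \<in> E" for e using yb_pos that by (auto simp: E_def)
  have fcont: "continuous_on {0..} (\<lambda>t. f t e)" if "e \<in> E" for e
    using sol that unfolding closed_loop_solution_def E_def by auto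
  have wcont: "continuous_on {0..} (\<lambda>t. w t i)" if "i \<in> N" for i
    using sol that unfolding closed_loop_solution_def N_def by auto
  have acont: "continuous_on {0..} (\<lambda>t. aM t i)" if "i \<in> N" for i
    using sol that unfolding closed_loop_solution_def N_def by auto
  have a0: "aM t i = 0" if "i \<notin> Iu S" "t \<ge> 0" for t i
    using sol that unfolding closed_loop_solution_def by auto
  define adf where "adf t i = alpha_df S p f w aM t i" for t i
  define cl where "cl t i = clamp_u S i (aM t i) (u_mpc S r Reg \<Delta> fc f w aM t i)" for t i
  define num where "num t i = - Ei S i * w t i - flow_out E (f t) i + p t i + (adf t i + aM t i)" for t i
  define W' where "W' t i = num t i / Mi S i" for t i
  define F' where "F' t e = yb S e * (w t (fst e) - w t (snd e))" for t e
  define A' where "A' t i = - aM t i / Tc S i - w t i + cl t i" for t i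
  obtain X where cX: "countable X" and dall: "\<forall>t>0. t \<notin> X \<longrightarrow>
          (\<forall>e\<in>edges S. ((\<lambda>s. f s e) has_real_derivative
                yb S e * (w t (fst e) - w t (snd e))) (at t))
        \<and> (\<forall>i\<in>nodes S. ((\<lambda>s. w s i) has_real_derivative
                (- Ei S i * w t i - flow_out (edges S) (f t) i + p t i
                 + (alpha_df S p f w aM t i + aM t i)) / Mi S i) (at t))
        \<and> (\<forall>i\<in>Iu S. ((\<lambda>s. aM s i) has_real_derivative
                (- aM t i / Tc S i - w t i
                 + clamp_u S i (aM t i) (u_mpc S r Reg \<Delta> fc f w aM t i))) (at t))"
    using sol unfolding closed_loop_solution_def by blast
  have dF: "((\<lambda>s. f s e) has_real_derivative F' t e) (at t)" if "0 < t" "t \<notin> X" "e \<in> E" for t e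
    using dall that unfolding F'_def E_def by blast
  have dW: "((\<lambda>s. w s i) has_real_derivative W' t i) (at t)" if "0 < t" "t \<notin> X" "i \<in> N" for t i
    using dall that unfolding W'_def num_def adf_def E_def N_def by blast
  have dA: "((\<lambda>s. aM s i) has_real_derivative A' t i) (at t)" if "0 < t" "t \<notin> X" "i \<in> Iu S" for t i
    using dall that unfolding A'_def cl_def by blast
  have wpar: "wpar S i" if "i \<in> Iw S" for i
    using w_params that by unfold_locales auto

  have inv: "\<forall>t\<ge>0. w t i \<in> {wlo S i .. whi S i}" if iw: "i \<in> Iw S" and w0: "w 0 i \<in> {wlo S i .. whi S i}" for i
  proof -
    interpret wpar S i by (rule wpar[OF iw])
    have iN: "i \<in> N" using iw IwIu IuN by auto
    have up: "w t1 i \<le> whi S i" if t1: "t1 \<ge> 0" for t1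
    proof (rule ccontr)
      assume "\<not> w t1 i \<le> whi S i"
      hence gt: "w t1 i > whi S i" by simp
      let ?A = "{s\<in>{0..t1}. w s i \<le> whi S i}"
      have Aeq: "?A = {0..t1} \<inter> (\<lambda>s. w s i) -` {..whi S i}" by auto
      have clA: "closed ?A" unfolding Aeq
        by (rule continuous_closed_preimage[OF continuous_on_subset[OF wcont[OF iN]]]) auto
      have neA: "?A \<noteq> {}" using w0 t1 by (intro ex_in_conv[THEN iffD1] exI[of _ 0]) auto
      have bdA: "bdd_above ?A" by (rule bdd_aboveI[of _ t1]) auto
      define s0 where "s0 = Sup ?A"
      have s0A: "s0 \<in> ?A" unfolding s0_def by (rule closed_contains_Sup[OF neA bdA clA])
      have up': "s \<le> s0" if "s \<in> ?A" for s unfolding s0_def by (rule cSup_upper[OF that bdA])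
      have s0lt: "s0 < t1" using s0A gt by (cases "s0 = t1") auto
      have after: "w s i > whi S i" if "s0 < s" "s \<le> t1" for s
        using up'[of s] that s0A by (cases "w s i \<le> whi S i") auto
      have "w t1 i - w s0 i \<le> 0 * (t1 - s0)"
      proof (rule deriv_le[OF _ continuous_on_subset[OF wcont[OF iN]] cX, where g'="\<lambda>t. W' t i"])
        show "s0 \<le> t1" using s0lt by simp
        show "{s0..t1} \<subseteq> {0..}" using s0A by auto
        fix s assume s: "s0 < s" "s < t1" "s \<notin> X"
        have s0': "0 < s" using s s0A by auto
        show "((\<lambda>t. w t i) has_real_derivative W' s i) (at s)" by (rule dW[OF s0' s(3) iN])
        have "w s i > whi S i" using after s by auto
        from num_hi[where w=w and t=s and aM=aM and p=p and f=f, OF iw this] have "num s i \<le> 0" unfolding num_def adf_def E_def .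
        thus "W' s i \<le> 0" unfolding W'_def using Mp[OF iN] by (simp add: divide_nonpos_pos)
      qed
      thus False using gt s0A by auto
    qed
    have lo: "w t1 i \<ge> wlo S i" if t1: "t1 \<ge> 0" for t1
    proof (rule ccontr)
      assume "\<not> w t1 i \<ge> wlo S i"
      hence gt: "w t1 i < wlo S i" by simp
      let ?A = "{s\<in>{0..t1}. w s i \<ge> wlo S i}"
      have Aeq: "?A = {0..t1} \<inter> (\<lambda>s. w s i) -` {wlo S i..}" by auto
      have clA: "closed ?A" unfolding Aeq
        by (rule continuous_closed_preimage[OF continuous_on_subset[OF wcont[OF iN]]]) auto
      have neA: "?A \<noteq> {}" using w0 t1 by (intro ex_in_conv[THEN iffD1] exI[of _ 0]) auto
      have bdA: "bdd_above ?A" by (rule bdd_aboveI[of _ t1]) auto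
      define s0 where "s0 = Sup ?A"
      have s0A: "s0 \<in> ?A" unfolding s0_def by (rule closed_contains_Sup[OF neA bdA clA])
      have up': "s \<le> s0" if "s \<in> ?A" for s unfolding s0_def by (rule cSup_upper[OF that bdA])
      have s0lt: "s0 < t1" using s0A gt by (cases "s0 = t1") auto
      have after: "w s i < wlo S i" if "s0 < s" "s \<le> t1" for s
        using up'[of s] that s0A by (cases "w s i \<ge> wlo S i") auto
      have "0 * (t1 - s0) \<le> w t1 i - w s0 i"
      proof (rule deriv_ge[OF _ continuous_on_subset[OF wcont[OF iN]] cX, where g'="\<lambda>t. W' t i"])
        show "s0 \<le> t1" using s0lt by simp
        show "{s0..t1} \<subseteq> {0..}" using s0A by auto
        fix s assume s: "s0 < s" "s < t1" "s \<notin> X"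
        have s0': "0 < s" using s s0A by auto
        show "((\<lambda>t. w t i) has_real_derivative W' s i) (at s)" by (rule dW[OF s0' s(3) iN])
        have "w s i < wlo S i" using after s by auto
        from num_lo[where w=w and t=s and aM=aM and p=p and f=f, OF iw this] have "num s i \<ge> 0" unfolding num_def adf_def E_def .
        thus "0 \<le> W' s i" unfolding W'_def using Mp[OF iN] by simp
      qed
      thus False using gt s0A by auto
    qed
    show ?thesis using up lo by auto
  qed
  obtain fo wo where ol: "open_loop_solution S p fo wo" and fo0: "fo 0 = f 0" and wo0: "wo 0 = w 0"
    and folim: "\<And>e. e\<in>E \<Longrightarrow> ((\<lambda>t. fo t e) \<longlongrightarrow> finf e) at_top"
    and wolim: "\<And>i. i\<in>N \<Longrightarrow> ((\<lambda>t. wo t i) \<longlongrightarrow> 0) at_top"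
    using eq unfolding E_def N_def by blast
  have focont: "continuous_on {0..} (\<lambda>t. fo t e)" if "e \<in> E" for e
    using ol that unfolding open_loop_solution_def E_def by auto
  have wocont: "continuous_on {0..} (\<lambda>t. wo t i)" if "i \<in> N" for i
    using ol that unfolding open_loop_solution_def N_def by auto
  obtain Xo where cXo: "countable Xo" and dallo: "\<forall>t>0. t \<notin> Xo \<longrightarrow>
          (\<forall>e\<in>edges S. ((\<lambda>s. fo s e) has_real_derivative
                yb S e * (wo t (fst e) - wo t (snd e))) (at t))
        \<and> (\<forall>i\<in>nodes S. ((\<lambda>s. wo s i) has_real_derivative
                (- Ei S i * wo t i - flow_out (edges S) (fo t) i + p t i) / Mi S i) (at t))"
    using ol unfolding open_loop_solution_def by blast
  define Wo' where "Wo' t i = (- Ei S i * wo t i - flow_out E (fo t) i + p t i) / Mi S i" for t i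
  have dFo: "((\<lambda>s. fo s e) has_real_derivative yb S e * (wo t (fst e) - wo t (snd e))) (at t)"
    if "0 < t" "t \<notin> Xo" "e \<in> E" for t e
    using dallo that unfolding E_def by blast
  have dWo: "((\<lambda>s. wo s i) has_real_derivative Wo' t i) (at t)" if "0 < t" "t \<notin> Xo" "i \<in> N" for t i
    using dallo that unfolding Wo'_def E_def N_def by blast
  have pst: "p t i = pstar i" if "t \<ge> tbar" "i \<in> N" for t i using tbar(2) that by (auto simp: N_def)

  have DT: "flow_out E finf i = pstar i" if iN: "i \<in> N" for i
  proof -
    define h where "h t = (- flow_out E (fo t) i + pstar i) / Mi S i" for t
    define hinf where "hinf = (- flow_out E finf i + pstar i) / Mi S i"
    have hlim: "(h \<longlongrightarrow> hinf) at_top" unfolding h_def hinf_def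
      using Mp[OF iN] by (intro tendsto_intros flow_out_tendsto[OF finE] folim) auto
    have "(h \<longlongrightarrow> 0) at_top"
    proof (rule slow_tendsto[OF cXo continuous_on_subset[OF wocont[OF iN]] wolim[OF iN], where a=tbar and g'="\<lambda>t. Wo' t i"])
      show "{tbar..} \<subseteq> {0..}" using tbar(1) by auto
      show "\<And>t. tbar < t \<Longrightarrow> t \<notin> Xo \<Longrightarrow> ((\<lambda>t. wo t i) has_real_derivative Wo' t i) (at t)"
        using dWo tbar(1) iN by auto
    next
      fix \<epsilon> :: real assume \<epsilon>: "\<epsilon> > 0"
      have "((\<lambda>t. - Ei S i * wo t i / Mi S i) \<longlongrightarrow> - Ei S i * 0 / Mi S i) at_top"
        using Mp[OF iN] by (intro tendsto_intros wolim[OF iN]) auto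
      hence "((\<lambda>t. - Ei S i * wo t i / Mi S i) \<longlongrightarrow> 0) at_top" by simp
      hence "eventually (\<lambda>t. dist (- Ei S i * wo t i / Mi S i) 0 < \<epsilon>) at_top" using \<epsilon> by (rule tendstoD)
      moreover have "eventually (\<lambda>t. t \<ge> tbar) at_top" by (rule eventually_ge_at_top)
      ultimately show "eventually (\<lambda>t. t \<notin> Xo \<longrightarrow> \<bar>Wo' t i - h t\<bar> \<le> \<epsilon>) at_top"
      proof eventually_elim
        case (elim t)
        have "Wo' t i - h t = - Ei S i * wo t i / Mi S i"
          unfolding Wo'_def h_def using Mp[OF iN] pst[OF elim(2) iN] by (simp add: field_simps)
        thus ?case using elim by simp
      qed
    next
      fix \<epsilon> :: real assume \<epsilon>: "\<epsilon> > 0"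
      have "eventually (\<lambda>t. dist (h t) hinf < \<epsilon>/2) at_top" using \<epsilon> by (intro tendstoD[OF hlim]) auto
      then obtain T where T: "\<And>t. t \<ge> T \<Longrightarrow> \<bar>h t - hinf\<bar> < \<epsilon>/2"
        unfolding eventually_at_top_linorder dist_real_def by auto
      show "eventually (\<lambda>t. \<forall>s\<in>{t..t+1}. \<bar>h s - h t\<bar> \<le> \<epsilon>) at_top"
        unfolding eventually_at_top_linorder
      proof (intro exI[of _ T] allI impI ballI)
        fix t s assume "T \<le> t" "s \<in> {t..t+1}"
        hence "\<bar>h s - hinf\<bar> < \<epsilon>/2" "\<bar>h t - hinf\<bar> < \<epsilon>/2" using T by auto
        thus "\<bar>h s - h t\<bar> \<le> \<epsilon>" by linarith
      qed
    qed
    hence "hinf = 0" using tendsto_unique[OF trivial_limit_at_top_linorder hlim] by auto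
    thus ?thesis unfolding hinf_def using Mp[OF iN] by simp
  qed
  have Tcp: "Tc S i > 0" "eps S i > 0" if "i \<in> Iu S" for i using u_params that by auto
  define ta where "ta t i = - Ei S i * (w t i)\<^sup>2 + w t i * adf t i" for t i
  define tb where "tb t i = - (aM t i)\<^sup>2 / Tc S i + aM t i * cl t i" for t i
  define V where "V t = (\<Sum>i\<in>N. Mi S i * (w t i)\<^sup>2) + (\<Sum>e\<in>E. (f t e - finf e)\<^sup>2 / yb S e)
                      + (\<Sum>i\<in>Iu S. (aM t i)\<^sup>2)" for t
  define V' where "V' t = 2 * ((\<Sum>i\<in>N. ta t i) + (\<Sum>i\<in>Iu S. tb t i))" for t
  have c1: "continuous_on {0..} (\<lambda>t. \<Sum>i\<in>N. Mi S i * (w t i)\<^sup>2)"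
  proof (rule continuous_on_sum)
    fix i assume "i \<in> N"
    show "continuous_on {0..} (\<lambda>t. Mi S i * (w t i)\<^sup>2)" by (intro continuous_intros wcont[OF \<open>i \<in> N\<close>])
  qed
  have c2: "continuous_on {0..} (\<lambda>t. \<Sum>e\<in>E. (f t e - finf e)\<^sup>2 / yb S e)"
  proof (rule continuous_on_sum)
    fix e assume e: "e \<in> E"
    show "continuous_on {0..} (\<lambda>t. (f t e - finf e)\<^sup>2 / yb S e)"
      using ybp[OF e] by (intro continuous_intros fcont[OF e]) auto
  qed
  have c3: "continuous_on {0..} (\<lambda>t. \<Sum>i\<in>Iu S. (aM t i)\<^sup>2)"
  proof (rule continuous_on_sum)
    fix i assume "i \<in> Iu S"
    hence "i \<in> N" using IuN by auto
    show "continuous_on {0..} (\<lambda>t. (aM t i)\<^sup>2)" by (intro continuous_intros acont[OF \<open>i \<in> N\<close>])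
  qed
  have Vcont: "continuous_on {0..} V" unfolding V_def by (intro continuous_on_add c1 c2 c3)
  have dV: "(V has_real_derivative V' t) (at t)" if t: "tbar < t" "t \<notin> X" for t
  proof -
    have t0: "0 < t" using t tbar(1) by auto
    have D: "(V has_real_derivative
        (\<Sum>i\<in>N. Mi S i * (2 * w t i * W' t i)) + (\<Sum>e\<in>E. 2 * (f t e - finf e) * F' t e / yb S e)
        + (\<Sum>i\<in>Iu S. 2 * aM t i * A' t i)) (at t)"
      unfolding V_def
    proof (intro DERIV_add DERIV_sum)
      show "((\<lambda>s. Mi S i * (w s i)\<^sup>2) has_real_derivative Mi S i * (2 * w t i * W' t i)) (at t)"
        if "i \<in> N" for i by (rule deriv_sq[OF dW[OF t0 t(2) that]])
      show "((\<lambda>s. (f s e - finf e)\<^sup>2 / yb S e) has_real_derivative 2 * (f t e - finf e) * F' t e / yb S e) (at t)"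
        if "e \<in> E" for e using ybp[OF that] by (intro deriv_sq_shift dF[OF t0 t(2) that]) auto
      show "((\<lambda>s. (aM s i)\<^sup>2) has_real_derivative 2 * aM t i * A' t i) (at t)"
        if "i \<in> Iu S" for i by (rule deriv_sq1[OF dA[OF t0 t(2) that]])
    qed
    have e1: "(\<Sum>i\<in>N. Mi S i * (2 * w t i * W' t i)) = 2 * (\<Sum>i\<in>N. w t i * num t i)"
      unfolding sum_distrib_left
    proof (intro sum.cong refl)
      fix i assume "i \<in> N"
      thus "Mi S i * (2 * w t i * W' t i) = 2 * (w t i * num t i)"
        using Mp[of i] unfolding W'_def by (simp add: field_simps)
    qed
    have e2a: "(\<Sum>e\<in>E. 2 * (f t e - finf e) * F' t e / yb S e)
        = 2 * (\<Sum>e\<in>E. (f t e - finf e) * (w t (fst e) - w t (snd e)))"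
      unfolding sum_distrib_left
    proof (intro sum.cong refl)
      fix e assume "e \<in> E"
      thus "2 * (f t e - finf e) * F' t e / yb S e = 2 * ((f t e - finf e) * (w t (fst e) - w t (snd e)))"
        using ybp[of e] unfolding F'_def by (simp add: field_simps)
    qed
    have e2b: "(\<Sum>e\<in>E. (f t e - finf e) * (w t (fst e) - w t (snd e)))
        = (\<Sum>i\<in>N. w t i * (flow_out E (f t) i - pstar i))"
      unfolding flow_sum[OF finN finE subE, of "\<lambda>e. f t e - finf e"] flow_out_diff
      by (intro sum.cong refl) (simp add: DT)
    have e3: "(\<Sum>i\<in>Iu S. 2 * aM t i * A' t i) = 2 * ((\<Sum>i\<in>Iu S. tb t i) - (\<Sum>i\<in>Iu S. w t i * aM t i))"
      unfolding sum_subtractf[symmetric] sum_distrib_left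
    proof (intro sum.cong refl)
      fix i assume "i \<in> Iu S"
      thus "2 * aM t i * A' t i = 2 * (tb t i - w t i * aM t i)"
        using Tcp[of i] unfolding A'_def tb_def by (simp add: field_simps power2_eq_square)
    qed
    have e4: "(\<Sum>i\<in>N. w t i * num t i) + (\<Sum>i\<in>N. w t i * (flow_out E (f t) i - pstar i))
        = (\<Sum>i\<in>N. ta t i) + (\<Sum>i\<in>N. w t i * aM t i)"
      unfolding sum.distrib[symmetric]
    proof (intro sum.cong refl)
      fix i assume "i \<in> N"
      thus "w t i * num t i + w t i * (flow_out E (f t) i - pstar i) = ta t i + w t i * aM t i"
        using pst[of t i] t unfolding num_def ta_def by (simp add: algebra_simps power2_eq_square)
    qed
    have e5: "(\<Sum>i\<in>N. w t i * aM t i) = (\<Sum>i\<in>Iu S. w t i * aM t i)"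
      by (rule sum.mono_neutral_right[OF finN IuN]) (use a0 t0 in auto)
    have "(\<Sum>i\<in>N. Mi S i * (2 * w t i * W' t i)) + (\<Sum>e\<in>E. 2 * (f t e - finf e) * F' t e / yb S e)
        + (\<Sum>i\<in>Iu S. 2 * aM t i * A' t i) = V' t"
      unfolding V'_def e1 e2a e2b e3 using e4 e5 by (simp add: algebra_simps)
    with D show ?thesis by simp
  qed
  have ta_le: "ta t i \<le> - Ei S i * (w t i)\<^sup>2" if "i \<in> N" for t i
  proof (cases "i \<in> Iw S")
    case True
    interpret wpar S i by (rule wpar[OF True])
    show ?thesis using adf_sign[of w t p f aM] unfolding ta_def adf_def by simp
  qed (simp add: ta_def adf_def alpha_df_def)
  have ta_nonpos: "ta t i \<le> 0" if "i \<in> N" for t i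
  proof -
    have "Ei S i * (w t i)\<^sup>2 \<ge> 0" using Ep[OF that] by simp
    thus ?thesis using ta_le[OF that, of t] by linarith
  qed
  have tb_le: "tb t i \<le> - (1 / Tc S i - eps S i) * (aM t i)\<^sup>2" if "i \<in> Iu S" for t i
  proof -
    have "aM t i * cl t i \<le> \<bar>aM t i\<bar> * \<bar>cl t i\<bar>" by (simp add: abs_mult[symmetric])
    also have "\<dots> \<le> \<bar>aM t i\<bar> * (eps S i * \<bar>aM t i\<bar>)"
      using clamp_bound[of S i] Tcp[OF that] unfolding cl_def by (intro mult_left_mono) auto
    also have "\<dots> = eps S i * (aM t i)\<^sup>2" by (simp add: power2_eq_square abs_mult_self_eq algebra_simps)
    finally show ?thesis unfolding tb_def by (simp add: algebra_simps)
  qed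
  have cpos: "1 / Tc S i - eps S i > 0" if "i \<in> Iu S" for i
  proof -
    have "eps S i * Tc S i < 1" using epsT that by auto
    thus ?thesis using Tcp[OF that] by (simp add: field_simps)
  qed
  have tb_nonpos: "tb t i \<le> 0" if "i \<in> Iu S" for t i
  proof -
    have "(1 / Tc S i - eps S i) * (aM t i)\<^sup>2 \<ge> 0" using cpos[OF that] by simp
    thus ?thesis using tb_le[OF that, of t] by linarith
  qed
  have V'w: "V' t \<le> - (2 * Ei S j) * (w t j)\<^sup>2" if "j \<in> N" for t j
  proof -
    have "(\<Sum>i\<in>N. ta t i) \<le> ta t j" by (rule sum_le_member[OF finN that ta_nonpos])
    moreover have "(\<Sum>i\<in>Iu S. tb t i) \<le> 0" by (rule sum_nonpos) (use tb_nonpos in auto)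
    ultimately show ?thesis using ta_le[OF that, of t] unfolding V'_def by simp
  qed
  have V'a: "V' t \<le> - (2 * (1 / Tc S j - eps S j)) * (aM t j)\<^sup>2" if "j \<in> Iu S" for t j
  proof -
    have "(\<Sum>i\<in>Iu S. tb t i) \<le> tb t j"
      by (rule sum_le_member[OF finite_subset[OF IuN finN] that tb_nonpos])
    moreover have "(\<Sum>i\<in>N. ta t i) \<le> 0" by (rule sum_nonpos) (use ta_nonpos in auto)
    ultimately have "V' t \<le> 2 * tb t j" unfolding V'_def distrib_left by linarith
    also have "\<dots> \<le> 2 * (- (1 / Tc S j - eps S j) * (aM t j)\<^sup>2)" using tb_le[OF that, of t] by linarith
    finally show ?thesis by (simp add: algebra_simps)
  qed
  have V'0: "V' t \<le> 0" for t
  proof -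
    have "(\<Sum>i\<in>Iu S. tb t i) \<le> 0" by (rule sum_nonpos) (use tb_nonpos in auto)
    moreover have "(\<Sum>i\<in>N. ta t i) \<le> 0" by (rule sum_nonpos) (use ta_nonpos in auto)
    ultimately show ?thesis unfolding V'_def by simp
  qed
  have t1nn: "0 \<le> Mi S i * (w t i)\<^sup>2" if "i \<in> N" for t i using Mp[OF that] by simp
  have t2nn: "0 \<le> (f t e - finf e)\<^sup>2 / yb S e" if "e \<in> E" for t e using ybp[OF that] by simp
  have Vnn: "V t \<ge> 0" for t
    unfolding V_def using t1nn t2nn by (intro add_nonneg_nonneg sum_nonneg) auto
  have Vmono: "V t \<le> V s" if "tbar \<le> s" "s \<le> t" for s t
  proof -
    have "V t - V s \<le> 0 * (t - s)"
    proof (rule deriv_le[OF that(2) continuous_on_subset[OF Vcont] cX, where g'=V'])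
      show "{s..t} \<subseteq> {0..}" using that tbar(1) by auto
      fix \<tau> assume "s < \<tau>" "\<tau> < t" "\<tau> \<notin> X"
      thus "(V has_real_derivative V' \<tau>) (at \<tau>)" using that by (intro dV) auto
      show "V' \<tau> \<le> 0" by (rule V'0)
    qed
    thus ?thesis by simp
  qed
  define K where "K = V tbar"
  have Vle: "V t \<le> K" if "t \<ge> tbar" for t using Vmono[of tbar t] that unfolding K_def by simp
  have s1le: "(\<Sum>i\<in>N. Mi S i * (w t i)\<^sup>2) \<le> K" and s2le: "(\<Sum>e\<in>E. (f t e - finf e)\<^sup>2 / yb S e) \<le> K"
    and s3le: "(\<Sum>i\<in>Iu S. (aM t i)\<^sup>2) \<le> K" if "t \<ge> tbar" for t
  proof -
    have n1: "(\<Sum>i\<in>N. Mi S i * (w t i)\<^sup>2) \<ge> 0" using t1nn by (intro sum_nonneg) auto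
    have n2: "(\<Sum>e\<in>E. (f t e - finf e)\<^sup>2 / yb S e) \<ge> 0" using t2nn by (intro sum_nonneg) auto
    have n3: "(\<Sum>i\<in>Iu S. (aM t i)\<^sup>2) \<ge> 0" by (intro sum_nonneg) auto
    show "(\<Sum>i\<in>N. Mi S i * (w t i)\<^sup>2) \<le> K" "(\<Sum>e\<in>E. (f t e - finf e)\<^sup>2 / yb S e) \<le> K"
      "(\<Sum>i\<in>Iu S. (aM t i)\<^sup>2) \<le> K"
      using Vle[OF that] n1 n2 n3 unfolding V_def by linarith+
  qed
  have wb: "\<bar>w t i\<bar> \<le> 1 + K / Mi S i" if t: "t \<ge> tbar" and iN: "i \<in> N" for t i
  proof -
    have "Mi S i * (w t i)\<^sup>2 \<le> (\<Sum>i\<in>N. Mi S i * (w t i)\<^sup>2)"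
      by (rule member_le_sum[OF iN _ finN]) (use t1nn in auto)
    hence "Mi S i * (w t i)\<^sup>2 \<le> K" using s1le[OF t] by linarith
    hence "(w t i)\<^sup>2 \<le> K / Mi S i" using Mp[OF iN] by (simp add: field_simps)
    thus ?thesis using abs_le_1_sq[of "w t i"] by linarith
  qed
  have fb: "\<bar>f t e - finf e\<bar> \<le> 1 + K * yb S e" if t: "t \<ge> tbar" and eE: "e \<in> E" for t e
  proof -
    have "(f t e - finf e)\<^sup>2 / yb S e \<le> (\<Sum>e\<in>E. (f t e - finf e)\<^sup>2 / yb S e)"
      by (rule member_le_sum[OF eE _ finE]) (use t2nn in auto)
    hence "(f t e - finf e)\<^sup>2 / yb S e \<le> K" using s2le[OF t] by linarith
    hence "(f t e - finf e)\<^sup>2 \<le> K * yb S e" using ybp[OF eE] by (simp add: field_simps)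
    thus ?thesis using abs_le_1_sq[of "f t e - finf e"] by linarith
  qed
  have ab: "\<bar>aM t i\<bar> \<le> 1 + K" if t: "t \<ge> tbar" for t i
  proof (cases "i \<in> Iu S")
    case True
    have "(aM t i)\<^sup>2 \<le> (\<Sum>i\<in>Iu S. (aM t i)\<^sup>2)"
      by (rule member_le_sum[OF True _ finite_subset[OF IuN finN]]) auto
    hence "(aM t i)\<^sup>2 \<le> K" using s3le[OF t] by linarith
    thus ?thesis using abs_le_1_sq[of "aM t i"] by linarith
  next
    case False
    have "K \<ge> 0" unfolding K_def by (rule Vnn)
    thus ?thesis using a0[OF False, of t] t tbar(1) by simp
  qed
  define BF where "BF = 2 * (\<Sum>e\<in>E. \<bar>finf e\<bar> + (1 + K * yb S e))"
  have flb: "\<bar>flow_out E (f t) i\<bar> \<le> BF" if t: "t \<ge> tbar" for t i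
  proof -
    have "\<bar>flow_out E (f t) i\<bar> \<le> 2 * (\<Sum>e\<in>E. \<bar>f t e\<bar>)" by (rule flow_out_bound[OF finE])
    also have "(\<Sum>e\<in>E. \<bar>f t e\<bar>) \<le> (\<Sum>e\<in>E. \<bar>finf e\<bar> + (1 + K * yb S e))"
    proof (rule sum_mono)
      fix e assume "e \<in> E"
      from fb[OF t this] show "\<bar>f t e\<bar> \<le> \<bar>finf e\<bar> + (1 + K * yb S e)" by linarith
    qed
    finally show ?thesis unfolding BF_def by simp
  qed
  define Bv where "Bv i = Ei S i * (1 + K / Mi S i) + BF + \<bar>pstar i\<bar> + (1 + K)" for i
  have vb: "\<bar>Ei S i * w t i + flow_out E (f t) i - p t i - aM t i\<bar> \<le> Bv i" if t: "t \<ge> tbar" and iN: "i \<in> N" for t i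
  proof -
    have "\<bar>Ei S i * w t i\<bar> = Ei S i * \<bar>w t i\<bar>" using Ep[OF iN] by (simp add: abs_mult)
    also have "\<dots> \<le> Ei S i * (1 + K / Mi S i)" using wb[OF t iN] Ep[OF iN] by (intro mult_left_mono) auto
    finally have ew: "\<bar>Ei S i * w t i\<bar> \<le> Ei S i * (1 + K / Mi S i)" .
    have "\<bar>Ei S i * w t i + flow_out E (f t) i - p t i - aM t i\<bar>
        \<le> \<bar>Ei S i * w t i\<bar> + \<bar>flow_out E (f t) i\<bar> + \<bar>p t i\<bar> + \<bar>aM t i\<bar>" by (rule abs4)
    also have "\<dots> \<le> Ei S i * (1 + K / Mi S i) + BF + \<bar>pstar i\<bar> + (1 + K)"
      using pst[OF t iN] by (intro add_mono ew flb[OF t] ab[OF t]) auto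
    finally show ?thesis unfolding Bv_def .
  qed
  have adfb: "\<bar>adf t i\<bar> \<le> Bv i + \<bar>ghi S i\<bar> + \<bar>glo S i\<bar>" if t: "t \<ge> tbar" and iN: "i \<in> N" for t i
  proof (cases "i \<in> Iw S")
    case True
    interpret wpar S i by (rule wpar[OF True])
    have "\<bar>adf t i\<bar> \<le> \<bar>Ei S i * w t i + flow_out E (f t) i - p t i - aM t i\<bar> + ghi S i + glo S i"
      using adf_bound[of p f w aM t] unfolding adf_def E_def .
    thus ?thesis using vb[OF t iN] by linarith
  next
    case False
    have "Bv i \<ge> 0" using vb[OF t iN] by linarith
    thus ?thesis using False by (simp add: adf_def alpha_df_def)
  qed
  define BW where "BW i = (2 * Bv i + \<bar>ghi S i\<bar> + \<bar>glo S i\<bar>) / Mi S i" for i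
  have W'b: "\<bar>W' t i\<bar> \<le> BW i" if t: "t \<ge> tbar" and iN: "i \<in> N" for t i
  proof -
    have "num t i = - (Ei S i * w t i + flow_out E (f t) i - p t i - aM t i) + adf t i"
      unfolding num_def by simp
    hence "\<bar>num t i\<bar> \<le> \<bar>Ei S i * w t i + flow_out E (f t) i - p t i - aM t i\<bar> + \<bar>adf t i\<bar>"
      by (simp add: abs2)
    also have "\<dots> \<le> Bv i + (Bv i + \<bar>ghi S i\<bar> + \<bar>glo S i\<bar>)" by (intro add_mono vb[OF t iN] adfb[OF t iN])
    finally have nb: "\<bar>num t i\<bar> \<le> 2 * Bv i + \<bar>ghi S i\<bar> + \<bar>glo S i\<bar>" by simp
    have "\<bar>W' t i\<bar> = \<bar>num t i\<bar> / Mi S i" unfolding W'_def using Mp[OF iN] by simp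
    also have "\<dots> \<le> (2 * Bv i + \<bar>ghi S i\<bar> + \<bar>glo S i\<bar>) / Mi S i"
      using Mp[OF iN] nb by (intro divide_right_mono) auto
    finally show ?thesis unfolding BW_def .
  qed
  have wlim: "((\<lambda>t. w t i) \<longlongrightarrow> 0) at_top" if iN: "i \<in> N" for i
  proof (rule energy_tendsto[OF cX continuous_on_subset[OF Vcont] continuous_on_subset[OF wcont[OF iN]],
        where a=tbar and V'=V' and g'="\<lambda>t. W' t i" and c="2 * Ei S i" and B="BW i"])
    show "{tbar..} \<subseteq> {0..}" using tbar(1) by auto
    show "{tbar..} \<subseteq> {0..}" using tbar(1) by auto
    show "\<And>t. tbar < t \<Longrightarrow> t \<notin> X \<Longrightarrow> (V has_real_derivative V' t) (at t)" by (rule dV)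
    show "\<And>t. tbar < t \<Longrightarrow> t \<notin> X \<Longrightarrow> ((\<lambda>t. w t i) has_real_derivative W' t i) (at t)"
      using dW iN tbar(1) by auto
    show "\<And>t. tbar < t \<Longrightarrow> t \<notin> X \<Longrightarrow> V' t \<le> - (2 * Ei S i) * (w t i)\<^sup>2" using V'w[OF iN] by blast
    show "0 < 2 * Ei S i" using Ep[OF iN] by simp
    show "\<And>t. tbar \<le> t \<Longrightarrow> 0 \<le> V t" by (rule Vnn)
    show "\<And>t. tbar < t \<Longrightarrow> t \<notin> X \<Longrightarrow> \<bar>W' t i\<bar> \<le> BW i" using W'b iN by auto
  qed
  have alim: "((\<lambda>t. aM t i) \<longlongrightarrow> 0) at_top" if iN: "i \<in> N" for i
  proof (cases "i \<in> Iu S")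
    case iu: True
    define BA where "BA = (1 + K) / Tc S i + (1 + K / Mi S i) + eps S i * (1 + K)"
    show ?thesis
    proof (rule energy_tendsto[OF cX continuous_on_subset[OF Vcont] continuous_on_subset[OF acont[OF iN]],
          where a=tbar and V'=V' and g'="\<lambda>t. A' t i" and c="2 * (1 / Tc S i - eps S i)" and B=BA])
      show "{tbar..} \<subseteq> {0..}" using tbar(1) by auto
      show "{tbar..} \<subseteq> {0..}" using tbar(1) by auto
      show "\<And>t. tbar < t \<Longrightarrow> t \<notin> X \<Longrightarrow> (V has_real_derivative V' t) (at t)" by (rule dV)
      show "\<And>t. tbar < t \<Longrightarrow> t \<notin> X \<Longrightarrow> ((\<lambda>t. aM t i) has_real_derivative A' t i) (at t)"
        using dA iu tbar(1) by auto
      show "\<And>t. tbar < t \<Longrightarrow> t \<notin> X \<Longrightarrow> V' t \<le> - (2 * (1 / Tc S i - eps S i)) * (aM t i)\<^sup>2"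
        using V'a[OF iu] by blast
      show "0 < 2 * (1 / Tc S i - eps S i)" using cpos[OF iu] by simp
      show "\<And>t. tbar \<le> t \<Longrightarrow> 0 \<le> V t" by (rule Vnn)
      fix t assume t: "tbar < t" "t \<notin> X"
      have t': "t \<ge> tbar" using t by simp
      have "\<bar>cl t i\<bar> \<le> eps S i * \<bar>aM t i\<bar>" using clamp_bound[of S i] Tcp[OF iu] unfolding cl_def by auto
      also have "\<dots> \<le> eps S i * (1 + K)" using ab[OF t', of i] Tcp[OF iu] by (intro mult_left_mono) auto
      finally have c1: "\<bar>cl t i\<bar> \<le> eps S i * (1 + K)" .
      have c2: "\<bar>aM t i / Tc S i\<bar> \<le> (1 + K) / Tc S i"
        using ab[OF t', of i] Tcp[OF iu] unfolding abs_divide abs_of_pos[OF Tcp(1)[OF iu]]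
        by (intro divide_right_mono) auto
      show "\<bar>A' t i\<bar> \<le> BA" unfolding A'_def BA_def using c1 c2 wb[OF t' iN] by linarith
    qed
  next
    case False
    have "eventually (\<lambda>t. aM t i = 0) at_top"
      using eventually_ge_at_top[of 0] by eventually_elim (use a0[OF False] in auto)
    thus ?thesis by (rule tendsto_eventually)
  qed
  have adf_ev: "eventually (\<lambda>t. adf t i = 0) at_top" if iN: "i \<in> N" for i
  proof (cases "i \<in> Iw S")
    case True
    interpret wpar S i by (rule wpar[OF True])
    have "eventually (\<lambda>t. dist (w t i) 0 < min (- thlo S i) (thhi S i)) at_top"
      using wp by (intro tendstoD[OF wlim[OF iN]]) auto
    thus ?thesis
    proof eventually_elim
      case (elim t)
      thus ?case unfolding adf_def by (intro adf_zero) (auto simp: dist_real_def)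
    qed
  qed (simp add: adf_def alpha_df_def)
  have adflim: "((\<lambda>t. adf t i) \<longlongrightarrow> 0) at_top" if iN: "i \<in> N" for i
    using adf_ev[OF iN] by (rule tendsto_eventually)
  have fwin: "eventually (\<lambda>t. \<forall>s\<in>{t..t+1}. \<bar>f s e - f t e\<bar> \<le> \<epsilon>) at_top" if eE: "e \<in> E" and \<epsilon>: "\<epsilon> > 0" for e \<epsilon>
  proof -
    have "((\<lambda>t. F' t e) \<longlongrightarrow> yb S e * (0 - 0)) at_top" unfolding F'_def
      using fstN[OF eE] by (intro tendsto_intros wlim)
    hence "eventually (\<lambda>t. dist (F' t e) 0 < \<epsilon>) at_top" using \<epsilon> by (intro tendstoD) auto
    then obtain T where T: "\<And>t. t \<ge> T \<Longrightarrow> \<bar>F' t e\<bar> < \<epsilon>"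
      unfolding eventually_at_top_linorder dist_real_def by auto
    show ?thesis unfolding eventually_at_top_linorder
    proof (intro exI[of _ "max T tbar"] allI impI ballI)
      fix t s assume t: "max T tbar \<le> t" and s: "s \<in> {t..t+1}"
      have "\<bar>f s e - f t e\<bar> \<le> \<epsilon> * (s - t)"
      proof (rule deriv_abs[OF _ continuous_on_subset[OF fcont[OF eE]] cX, where g'="\<lambda>\<tau>. F' \<tau> e"])
        show "t \<le> s" using s by simp
        show "{t..s} \<subseteq> {0..}" using t tbar(1) by auto
        fix \<tau> assume \<tau>: "t < \<tau>" "\<tau> < s" "\<tau> \<notin> X"
        show "((\<lambda>s. f s e) has_real_derivative F' \<tau> e) (at \<tau>)" using \<tau> t tbar(1) by (intro dF eE) auto
        show "\<bar>F' \<tau> e\<bar> \<le> \<epsilon>" using T[of \<tau>] \<tau> t by auto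
      qed
      also have "\<dots> \<le> \<epsilon> * 1" using s \<epsilon> by (intro mult_left_mono) auto
      finally show "\<bar>f s e - f t e\<bar> \<le> \<epsilon>" by simp
    qed
  qed
  have flwin: "eventually (\<lambda>t. \<forall>s\<in>{t..t+1}. \<bar>flow_out E (f s) i - flow_out E (f t) i\<bar> \<le> \<epsilon>) at_top"
    if \<epsilon>: "\<epsilon> > 0" for i \<epsilon>
  proof -
    define \<epsilon>' where "\<epsilon>' = \<epsilon> / (2 * real (card E) + 2)"
    have \<epsilon>': "\<epsilon>' > 0" using \<epsilon> unfolding \<epsilon>'_def by (simp add: add_pos_nonneg)
    have ce: "2 * (real (card E) * \<epsilon>') \<le> \<epsilon>"
    proof -
      have "real (card E) * \<epsilon>' \<le> (real (card E) + 1) * \<epsilon>'" using \<epsilon>' by (simp add: distrib_right)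
      moreover have "(real (card E) + 1) * \<epsilon>' = \<epsilon> / 2" unfolding \<epsilon>'_def by (simp add: field_simps)
      ultimately show ?thesis by linarith
    qed
    have "eventually (\<lambda>t. \<forall>e\<in>E. \<forall>s\<in>{t..t+1}. \<bar>f s e - f t e\<bar> \<le> \<epsilon>') at_top"
      by (rule eventually_ball_finite[OF finE]) (use fwin \<epsilon>' in auto)
    thus ?thesis
    proof eventually_elim
      case (elim t)
      show ?case
      proof
        fix s assume s: "s \<in> {t..t+1}"
        have "\<bar>flow_out E (f s) i - flow_out E (f t) i\<bar> = \<bar>flow_out E (\<lambda>e. f s e - f t e) i\<bar>"
          by (simp add: flow_out_diff)
        also have "\<dots> \<le> 2 * (\<Sum>e\<in>E. \<bar>f s e - f t e\<bar>)" by (rule flow_out_bound[OF finE])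
        also have "\<dots> \<le> 2 * (\<Sum>e\<in>E. \<epsilon>')"
          using elim s by (intro mult_left_mono sum_mono) auto
        also have "\<dots> = 2 * (real (card E) * \<epsilon>')" by simp
        also have "\<dots> \<le> \<epsilon>" by (rule ce)
        finally show "\<bar>flow_out E (f s) i - flow_out E (f t) i\<bar> \<le> \<epsilon>" .
      qed
    qed
  qed
  have FL: "((\<lambda>t. flow_out E (f t) i) \<longlongrightarrow> pstar i) at_top" if iN: "i \<in> N" for i
  proof -
    define h where "h t = (- flow_out E (f t) i + pstar i) / Mi S i" for t
    have "(h \<longlongrightarrow> 0) at_top"
    proof (rule slow_tendsto[OF cX continuous_on_subset[OF wcont[OF iN]] wlim[OF iN], where a=tbar and g'="\<lambda>t. W' t i"])
      show "{tbar..} \<subseteq> {0..}" using tbar(1) by auto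
      show "\<And>t. tbar < t \<Longrightarrow> t \<notin> X \<Longrightarrow> ((\<lambda>t. w t i) has_real_derivative W' t i) (at t)"
        using dW tbar(1) iN by auto
    next
      fix \<epsilon> :: real assume \<epsilon>: "\<epsilon> > 0"
      have "((\<lambda>t. (- Ei S i * w t i + adf t i + aM t i) / Mi S i) \<longlongrightarrow> (- Ei S i * 0 + 0 + 0) / Mi S i) at_top"
        using Mp[OF iN] by (intro tendsto_intros wlim[OF iN] adflim[OF iN] alim[OF iN]) auto
      hence "((\<lambda>t. (- Ei S i * w t i + adf t i + aM t i) / Mi S i) \<longlongrightarrow> 0) at_top" by simp
      hence "eventually (\<lambda>t. dist ((- Ei S i * w t i + adf t i + aM t i) / Mi S i) 0 < \<epsilon>) at_top"
        using \<epsilon> by (rule tendstoD)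
      moreover have "eventually (\<lambda>t. t \<ge> tbar) at_top" by (rule eventually_ge_at_top)
      ultimately show "eventually (\<lambda>t. t \<notin> X \<longrightarrow> \<bar>W' t i - h t\<bar> \<le> \<epsilon>) at_top"
      proof eventually_elim
        case (elim t)
        have "W' t i - h t = (- Ei S i * w t i + adf t i + aM t i) / Mi S i"
          unfolding W'_def num_def h_def using Mp[OF iN] pst[OF elim(2) iN] by (simp add: field_simps)
        thus ?case using elim by simp
      qed
    next
      fix \<epsilon> :: real assume \<epsilon>: "\<epsilon> > 0"
      have "eventually (\<lambda>t. \<forall>s\<in>{t..t+1}. \<bar>flow_out E (f s) i - flow_out E (f t) i\<bar> \<le> \<epsilon> * Mi S i) at_top"
        using \<epsilon> Mp[OF iN] by (intro flwin) simp
      thus "eventually (\<lambda>t. \<forall>s\<in>{t..t+1}. \<bar>h s - h t\<bar> \<le> \<epsilon>) at_top"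
      proof eventually_elim
        case (elim t)
        show ?case
        proof
          fix s assume s: "s \<in> {t..t+1}"
          have "h s - h t = - (flow_out E (f s) i - flow_out E (f t) i) / Mi S i"
            unfolding h_def using Mp[OF iN] by (simp add: field_simps)
          hence "\<bar>h s - h t\<bar> = \<bar>flow_out E (f s) i - flow_out E (f t) i\<bar> / Mi S i"
            using Mp[OF iN] by (simp add: abs_divide)
          also have "\<dots> \<le> (\<epsilon> * Mi S i) / Mi S i" using elim s Mp[OF iN] by (intro divide_right_mono) auto
          also have "\<dots> = \<epsilon>" using Mp[OF iN] by simp
          finally show "\<bar>h s - h t\<bar> \<le> \<epsilon>" .
        qed
      qed
    qed
    hence "((\<lambda>t. pstar i - Mi S i * h t) \<longlongrightarrow> pstar i - Mi S i * 0) at_top" by (intro tendsto_intros)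
    moreover have "(\<lambda>t. pstar i - Mi S i * h t) = (\<lambda>t. flow_out E (f t) i)"
      unfolding h_def using Mp[OF iN] by (intro ext) (simp add: field_simps)
    ultimately show ?thesis by simp
  qed

  \<comment> \<open>cycle components are conserved\<close>
  have CYC: "(\<Sum>e\<in>E. c e * (f t e - finf e) / yb S e) = 0"
    if cf: "\<And>i. i \<in> N \<Longrightarrow> flow_out E c i = 0" and t: "t \<ge> 0" for c t
  proof -
    have q1: "(\<Sum>e\<in>E. c e * f t e / yb S e) = (\<Sum>e\<in>E. c e * f 0 e / yb S e)"
      by (rule cycle_const[OF finN finE subE ybp cf cX fcont _ t, where \<psi>=w]) (use dF F'_def in auto)
    have q2: "(\<Sum>e\<in>E. c e * fo s e / yb S e) = (\<Sum>e\<in>E. c e * f 0 e / yb S e)" if "s \<ge> 0" for s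
      using cycle_const[OF finN finE subE ybp cf cXo focont _ that, where \<psi>=wo] dFo fo0 by auto
    have "((\<lambda>s. \<Sum>e\<in>E. c e * fo s e / yb S e) \<longlongrightarrow> (\<Sum>e\<in>E. c e * finf e / yb S e)) at_top"
    proof (rule tendsto_sum)
      fix e assume e: "e \<in> E"
      show "((\<lambda>s. c e * fo s e / yb S e) \<longlongrightarrow> c e * finf e / yb S e) at_top"
        using ybp[OF e] by (intro tendsto_intros folim[OF e]) auto
    qed
    moreover have "((\<lambda>s. \<Sum>e\<in>E. c e * fo s e / yb S e) \<longlongrightarrow> (\<Sum>e\<in>E. c e * f 0 e / yb S e)) at_top"
      by (intro tendsto_eventually eventually_mono[OF eventually_ge_at_top[of 0]] q2)
    ultimately have q3: "(\<Sum>e\<in>E. c e * finf e / yb S e) = (\<Sum>e\<in>E. c e * f 0 e / yb S e)"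
      using tendsto_unique[OF trivial_limit_at_top_linorder] by blast
    have "(\<Sum>e\<in>E. c e * (f t e - finf e) / yb S e)
        = (\<Sum>e\<in>E. c e * f t e / yb S e) - (\<Sum>e\<in>E. c e * finf e / yb S e)"
      by (simp add: sum_subtractf[symmetric] right_diff_distrib diff_divide_distrib)
    thus ?thesis using q1 q3 by simp
  qed
  have Knn: "K \<ge> 0" unfolding K_def by (rule Vnn)
  have FC: "((\<lambda>t. f t e0) \<longlongrightarrow> finf e0) at_top" if e0: "e0 \<in> E" for e0
  proof (rule ccontr)
    assume nc: "\<not> ((\<lambda>t. f t e0) \<longlongrightarrow> finf e0) at_top"
    then obtain \<delta> where \<delta>: "\<delta> > 0" and nev: "\<not> eventually (\<lambda>t. dist (f t e0) (finf e0) < \<delta>) at_top"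
      unfolding tendsto_iff by auto
    have freq: "\<exists>t\<ge>T. \<bar>f t e0 - finf e0\<bar> \<ge> \<delta>" for T
      using nev unfolding eventually_at_top_linorder dist_real_def by (auto simp: not_less)
    have "\<forall>n::nat. \<exists>t. t \<ge> max tbar (real n) \<and> \<bar>f t e0 - finf e0\<bar> \<ge> \<delta>" using freq by blast
    then obtain tt where tt: "\<And>n. tt n \<ge> max tbar (real n)" "\<And>n. \<bar>f (tt n) e0 - finf e0\<bar> \<ge> \<delta>"
      by metis
    define x where "x n e = f (tt n) e - finf e" for n e
    define Bx where "Bx = (\<Sum>e\<in>E. 1 + K * yb S e)"
    have bxnn: "0 \<le> 1 + K * yb S e" if "e \<in> E" for e using Knn ybp[OF that] by simp
    have xb: "\<bar>x n e\<bar> \<le> Bx" if e: "e \<in> E" for n e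
    proof -
      have "\<bar>x n e\<bar> \<le> 1 + K * yb S e" unfolding x_def by (rule fb) (use tt(1)[of n] e in auto)
      also have "\<dots> \<le> Bx" unfolding Bx_def
        by (rule member_le_sum[OF e _ finE]) (use bxnn in blast)
      finally show ?thesis .
    qed
    obtain r where r: "strict_mono r" "\<forall>e\<in>E. convergent (\<lambda>n. x (r n) e)"
      using finite_subseq[OF finE, of x Bx] xb by blast
    define G where "G e = lim (\<lambda>n. x (r n) e)" for e
    have Glim: "(\<lambda>n. x (r n) e) \<longlonglongrightarrow> G e" if "e \<in> E" for e
      using r(2) that unfolding G_def by (simp add: convergent_LIMSEQ_iff)
    have "filterlim (\<lambda>n. real (r n)) at_top sequentially"
      by (rule filterlim_compose[OF filterlim_real_sequentially filterlim_subseq[OF r(1)]])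
    moreover have "eventually (\<lambda>n. real (r n) \<le> tt (r n)) sequentially"
    proof (rule always_eventually, rule allI)
      fix n
      have "max tbar (real (r n)) \<le> tt (r n)" by (rule tt(1))
      thus "real (r n) \<le> tt (r n)" by simp
    qed
    ultimately have ttlim: "filterlim (\<lambda>n. tt (r n)) at_top sequentially"
      by (rule filterlim_at_top_mono)
    have Gflow: "flow_out E G i = 0" if iN: "i \<in> N" for i
    proof -
      have a: "(\<lambda>n. flow_out E (x (r n)) i) \<longlonglongrightarrow> flow_out E G i" by (rule flow_out_tendsto[OF finE Glim])
      have "(\<lambda>n. flow_out E (f (tt (r n))) i - flow_out E finf i) \<longlonglongrightarrow> pstar i - pstar i"
        unfolding DT[OF iN] by (intro tendsto_diff filterlim_compose[OF FL[OF iN] ttlim] tendsto_const)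
      moreover have "(\<lambda>n. flow_out E (x (r n)) i) = (\<lambda>n. flow_out E (f (tt (r n))) i - flow_out E finf i)"
        unfolding x_def by (simp add: flow_out_diff)
      ultimately have b: "(\<lambda>n. flow_out E (x (r n)) i) \<longlonglongrightarrow> 0" by simp
      show ?thesis using LIMSEQ_unique[OF a b] .
    qed
    have orth: "(\<Sum>e\<in>E. G e * x n e / yb S e) = 0" for n
      unfolding x_def by (rule CYC[OF Gflow]) (use tt(1)[of n] tbar(1) in auto)
    have "(\<lambda>n. \<Sum>e\<in>E. G e * x (r n) e / yb S e) \<longlonglongrightarrow> (\<Sum>e\<in>E. G e * G e / yb S e)"
    proof (rule tendsto_sum)
      fix e assume e: "e \<in> E"
      show "(\<lambda>n. G e * x (r n) e / yb S e) \<longlonglongrightarrow> G e * G e / yb S e"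
        using ybp[OF e] by (intro tendsto_intros Glim[OF e]) auto
    qed
    hence "(\<lambda>n. 0::real) \<longlonglongrightarrow> (\<Sum>e\<in>E. G e * G e / yb S e)" unfolding orth .
    hence sum0: "(\<Sum>e\<in>E. G e * G e / yb S e) = 0" by (rule LIMSEQ_unique[OF tendsto_const, symmetric])
    have nn: "0 \<le> G e * G e / yb S e" if "e \<in> E" for e
      using ybp[OF that] by (intro divide_nonneg_pos) simp_all
    have "\<forall>e\<in>E. G e * G e / yb S e = 0" using sum0 sum_nonneg_eq_0_iff[OF finE, of "\<lambda>e. G e * G e / yb S e"] nn
      by simp
    hence "G e0 * G e0 / yb S e0 = 0" using e0 by (rule bspec)
    hence G0: "G e0 = 0" using ybp[OF e0] by simp
    have "(\<lambda>n. \<bar>x (r n) e0\<bar>) \<longlonglongrightarrow> \<bar>G e0\<bar>" by (intro tendsto_rabs Glim[OF e0])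
    moreover have "\<exists>N. \<forall>n\<ge>N. \<delta> \<le> \<bar>x (r n) e0\<bar>"
      by (intro exI[of _ 0] allI impI) (simp only: x_def tt(2))
    ultimately have "\<delta> \<le> \<bar>G e0\<bar>" by (rule LIMSEQ_le_const)
    with G0 \<delta> show False by simp
  qed

  have part2: "\<exists>t0. \<forall>t\<ge>t0. w t i \<in> {wlo S i .. whi S i}" if iw: "i \<in> Iw S" for i
  proof -
    interpret wpar S i by (rule wpar[OF iw])
    have iN: "i \<in> N" using iw IwIu IuN by auto
    have "eventually (\<lambda>t. dist (w t i) 0 < min (- wlo S i) (whi S i)) at_top"
      using wp by (intro tendstoD[OF wlim[OF iN]]) auto
    then obtain t0 where t0: "\<And>t. t \<ge> t0 \<Longrightarrow> dist (w t i) 0 < min (- wlo S i) (whi S i)"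
      unfolding eventually_at_top_linorder by auto
    show ?thesis
    proof (intro exI[of _ t0] allI impI)
      fix t assume "t0 \<le> t"
      hence "\<bar>w t i\<bar> < - wlo S i" "\<bar>w t i\<bar> < whi S i" using t0 by (auto simp: dist_real_def)
      thus "w t i \<in> {wlo S i .. whi S i}" by (simp add: abs_less_iff)
    qed
  qed
  show ?thesis
  proof (intro conjI ballI impI)
    fix i assume "i \<in> Iw S" "w 0 i \<in> {wlo S i .. whi S i}"
    thus "\<forall>t\<ge>0. w t i \<in> {wlo S i .. whi S i}" by (rule inv)
  next
    fix i assume "i \<in> Iw S"
    thus "\<exists>t0. \<forall>t\<ge>t0. w t i \<in> {wlo S i .. whi S i}" by (rule part2)
  next
    fix e assume "e \<in> edges S"
    thus "((\<lambda>t. f t e) \<longlongrightarrow> finf e) at_top" using FC unfolding E_def by blast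
  next
    fix i assume "i \<in> nodes S"
    thus "((\<lambda>t. w t i) \<longlongrightarrow> 0) at_top" using wlim unfolding N_def by blast
  next
    fix i assume "i \<in> nodes S"
    hence iN: "i \<in> N" unfolding N_def .
    have "((\<lambda>t. adf t i + aM t i) \<longlongrightarrow> 0 + 0) at_top" by (intro tendsto_add adflim[OF iN] alim[OF iN])
    thus "((\<lambda>t. alpha_df S p f w aM t i + aM t i) \<longlongrightarrow> 0) at_top" unfolding adf_def by simp
  next
    fix i assume "i \<in> nodes S"
    thus "((\<lambda>t. aM t i) \<longlongrightarrow> 0) at_top" using alim unfolding N_def by blast
  next
    fix i assume "i \<in> nodes S"
    thus "((\<lambda>t. alpha_df S p f w aM t i) \<longlongrightarrow> 0) at_top" using adflim unfolding N_def adf_def by blast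
  qed
qed

end
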